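(* For all positive integers $d,t,k,w$ with $dt+1\le k$, there is a $t$-private $k$-server PIR protocol for databases of $N$ records, each record being $w(k-dt)\lceil\log_2k\rceil$ bits long, such that the upload cost is $O(k^3\log k\cdot N^{1/d})$ bits and the download cost is $wk\lceil\log_2k\rceil$ bits. Consequently its download rate is $1-dt/k$.
   Context: A $t$-private $k$-server private information retrieval (PIR) protocol for databases in $\mathcal{Y}^N$ (replicated at all $k$ servers) lets a client retrieve the $i$-th symbol for any $i\in[N]$ so that the client's messages to any $t$ servers have a distribution independent of $i$. Equivalently it is a $t$-private $k$-server HSS with $m=1$ input $i\in[N]$ for the class of all functions $f:[N]\to\mathcal{Y}$ (the database): the client shares $i$ with $\mathsf{Share}$, each server returns $\mathsf{Eval}(f,j,\text{its share})$, and the client runs $\mathsf{Rec}$ to obtain $f(i)$ with probability 1. Upload cost is the total bit length of the input shares; download cost is the total bit length of the output shares; download rate is $\log_2|\mathcal{Y}|$ divided by the download cost. *)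

theory Defs
  imports "HOL-Probability.Probability"
begin

text \<open>A database of N records of L bits is a list db of length N of bool lists of length L;
  record indices are 0..N-1, server indices are 0..k-1.\<close>

definition clog2 :: "nat \<Rightarrow> nat" where
  "clog2 k = nat \<lceil>log 2 (real k)\<rceil>"

definition valid_db :: "nat \<Rightarrow> nat \<Rightarrow> bool list list \<Rightarrow> bool" where
  "valid_db N L db \<longleftrightarrow> length db = N \<and> (\<forall>x\<in>set db. length x = L)"

text \<open>A t-private k-server PIR protocol (= t-private k-server HSS with one input i in [N]
  for the class of all databases f : [N] -> {0,1}^L).
  Share i is the (randomized) vector of k input shares; Eval db j s is the output share of
  server j; Rec maps the k output shares to the record, correct with probability 1.\<close>

definition is_PIR ::
  "nat \<Rightarrow> nat \<Rightarrow> nat \<Rightarrow> nat \<Rightarrow> (nat \<Rightarrow> bool list list pmf)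
   \<Rightarrow> (bool list list \<Rightarrow> nat \<Rightarrow> bool list \<Rightarrow> bool list)
   \<Rightarrow> (bool list list \<Rightarrow> bool list) \<Rightarrow> bool" where
  "is_PIR t k N L Share Eval Rec \<longleftrightarrow>
     (\<forall>i<N. \<forall>s\<in>set_pmf (Share i). length s = k) \<and>
     (\<forall>db i. valid_db N L db \<and> i < N \<longrightarrow>
        (\<forall>s\<in>set_pmf (Share i). Rec (map (\<lambda>j. Eval db j (s ! j)) [0..<k]) = db ! i)) \<and>
     (\<forall>T i i'. T \<subseteq> {..<k} \<and> card T \<le> t \<and> i < N \<and> i' < N \<longrightarrow>
        map_pmf (\<lambda>s. map (\<lambda>j. s ! j) (sorted_list_of_set T)) (Share i) =
        map_pmf (\<lambda>s. map (\<lambda>j. s ! j) (sorted_list_of_set T)) (Share i'))"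

definition upload_cost_le :: "nat \<Rightarrow> (nat \<Rightarrow> bool list list pmf) \<Rightarrow> real \<Rightarrow> bool" where
  "upload_cost_le N Share U \<longleftrightarrow>
     (\<forall>i<N. \<forall>s\<in>set_pmf (Share i). real (sum_list (map length s)) \<le> U)"

definition download_cost_eq ::
  "nat \<Rightarrow> nat \<Rightarrow> nat \<Rightarrow> (nat \<Rightarrow> bool list list pmf)
   \<Rightarrow> (bool list list \<Rightarrow> nat \<Rightarrow> bool list \<Rightarrow> bool list) \<Rightarrow> nat \<Rightarrow> bool" where
  "download_cost_eq k N L Share Eval D \<longleftrightarrow>
     (\<forall>db i. valid_db N L db \<and> i < N \<longrightarrow>
        (\<forall>s\<in>set_pmf (Share i). sum_list (map (\<lambda>j. length (Eval db j (s ! j))) [0..<k]) = D))"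

definition download_rate :: "nat \<Rightarrow> nat \<Rightarrow> real" where
  "download_rate L D = real L / real D"

end

theory Submission
  imports Defs "HOL-Library.Z2" "HOL-Library.Function_Algebras" "HOL-Algebra.Algebraic_Closure_Type"
begin


type_synonym K = "bit alg_closure"

lemma two_K: "(2::K) = 0"
  by (metis to_ac_numeral bit_2_eq_0 to_ac_0)

lemma K_add_self[simp]: "(x::K) + x = 0"
proof -
  have "x + x = 2 * x" by simp
  thus ?thesis by (simp add: two_K)
qed

lemma K_uminus[simp]: "- (x::K) = x"
  by (metis K_add_self add.inverse_unique)

lemma K_minus: "(x::K) - y = x + y"
  by simp

lemma frob2: "((x::K) + y) ^ 2 = x ^ 2 + y ^ 2"
proof -
  have "(x + y)^2 = x^2 + y^2 + 2*x*y" by (simp add: power2_eq_square algebra_simps)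
  thus ?thesis by (simp add: two_K)
qed

lemma frob: "((x::K) + y) ^ (2^m) = x ^ (2^m) + y ^ (2^m)"
proof (induction m)
  case 0 then show ?case by simp
next
  case (Suc m)
  have "(x + y) ^ (2 ^ Suc m) = ((x+y)^(2^m))^2" by (simp add: power_mult[symmetric] mult.commute)
  also have "\<dots> = (x^(2^m))^2 + (y^(2^m))^2" by (simp add: Suc frob2)
  also have "\<dots> = x ^ (2^Suc m) + y ^ (2^Suc m)" by (simp add: power_mult[symmetric] mult.commute)
  finally show ?case .
qed

lemma alg_closed_card_roots:
  fixes p :: "'a::alg_closed_field poly"
  assumes "p \<noteq> 0" "\<And>x. poly p x = 0 \<Longrightarrow> poly (pderiv p) x \<noteq> 0"
  shows "card {x. poly p x = 0} = Polynomial.degree p"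
  using assms
proof (induction "Polynomial.degree p" arbitrary: p rule: less_induct)
  case (less p)
  show ?case
  proof (cases "Polynomial.degree p = 0")
    case True
    then obtain a where "p = [:a:]" by (meson degree_eq_zeroE)
    with less.prems have "a \<noteq> 0" by auto
    with \<open>p = [:a:]\<close> True show ?thesis by simp
  next
    case False
    then obtain x where x: "poly p x = 0"
      using alg_closed_imp_poly_has_root by blast
    hence "[:-x, 1:] dvd p"
      using poly_eq_0_iff_dvd by blast
    then obtain q where p_eq: "p = [:-x, 1:] * q"
      by (elim dvdE)
    have "q \<noteq> 0" using less.prems p_eq by auto
    have deg: "Polynomial.degree p = Suc (Polynomial.degree q)"
      unfolding p_eq using \<open>q \<noteq> 0\<close> by (subst degree_mult_eq) auto
    have pd: "pderiv p = q + [:-x, 1:] * pderiv q"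
      unfolding p_eq by (subst pderiv_mult) (simp add: pderiv_pCons add.commute)
    have qx: "poly q x \<noteq> 0"
      using less.prems(2)[OF x] pd by simp
    have IH: "card {y. poly q y = 0} = Polynomial.degree q"
    proof (rule less.hyps)
      show "Polynomial.degree q < Polynomial.degree p" using deg by simp
      show "q \<noteq> 0" by fact
      fix y assume y: "poly q y = 0"
      then have "poly p y = 0" by (simp add: p_eq)
      then have "poly (pderiv p) y \<noteq> 0" using less.prems(2) by blast
      then show "poly (pderiv q) y \<noteq> 0" using pd y by auto
    qed
    have "{y. poly p y = 0} = insert x {y. poly q y = 0}"
      by (auto simp: p_eq x)
    moreover have "finite {y. poly q y = 0}" using \<open>q \<noteq> 0\<close> poly_roots_finite by blast
    ultimately show ?thesis using qx IH deg by simp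
  qed
qed

definition GF :: "nat \<Rightarrow> K set" where "GF m = {x. x ^ (2^m) = x}"

lemma GF_card:
  assumes "m \<ge> 1"
  shows "card (GF m) = 2^m" "finite (GF m)"
proof -
  define p :: "K poly" where "p = Polynomial.monom 1 (2^m) - [:0, 1:]"
  have m2: "(2::nat) \<le> 2^m" using assms
    by (metis one_le_numeral power_increasing power_one_right)
  have degp: "Polynomial.degree p = 2^m" unfolding p_def
    using m2 by (simp add: diff_conv_add_uminus degree_add_eq_left degree_monom_eq)
  have p0: "p \<noteq> 0" using degp m2 by auto
  have pd: "pderiv p = - 1"
  proof -
    have pw: "(2::K)^m = 0" using assms by (simp add: two_K)
    show ?thesis unfolding p_def by (simp add: pderiv_diff pderiv_monom pderiv_pCons pw pCons_one)
  qed
  have roots: "{x. poly p x = 0} = GF m"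
    unfolding p_def GF_def by (auto simp: poly_monom)
  have "card {x. poly p x = 0} = Polynomial.degree p"
    by (rule alg_closed_card_roots[OF p0]) (simp add: pd)
  then show "card (GF m) = 2^m" using roots degp by simp
  show "finite (GF m)" using roots poly_roots_finite[OF p0] by simp
qed

lemma GF_0[simp]: "0 \<in> GF m" and GF_1[simp]: "1 \<in> GF m"
  by (auto simp: GF_def)

lemma GF_add[simp]: "x \<in> GF m \<Longrightarrow> y \<in> GF m \<Longrightarrow> x + y \<in> GF m"
  by (simp add: GF_def frob)

lemma GF_mult[simp]: "x \<in> GF m \<Longrightarrow> y \<in> GF m \<Longrightarrow> x * y \<in> GF m"
  by (simp add: GF_def power_mult_distrib)

lemma GF_inverse[simp]: "x \<in> GF m \<Longrightarrow> inverse x \<in> GF m"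
  by (simp add: GF_def power_inverse)

lemma GF_divide[simp]: "x \<in> GF m \<Longrightarrow> y \<in> GF m \<Longrightarrow> x / y \<in> GF m"
  by (simp add: divide_inverse)

lemma GF_minus[simp]: "x \<in> GF m \<Longrightarrow> y \<in> GF m \<Longrightarrow> x - y \<in> GF m"
  by (simp add: K_minus)

lemma GF_uminus[simp]: "x \<in> GF m \<Longrightarrow> - x \<in> GF m"
  by simp

lemma GF_power[simp]: "x \<in> GF m \<Longrightarrow> x ^ e \<in> GF m"
  by (induction e) auto

lemma GF_sum[simp]: "(\<And>i. i \<in> I \<Longrightarrow> f i \<in> GF m) \<Longrightarrow> sum f I \<in> GF m"
  by (induction I rule: infinite_finite_induct) auto

lemma GF_prod[simp]: "(\<And>i. i \<in> I \<Longrightarrow> f i \<in> GF m) \<Longrightarrow> prod f I \<in> GF m"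
  by (induction I rule: infinite_finite_induct) auto

lemma GF_mono: "GF c \<subseteq> GF (c * j)"
proof
  fix x assume x: "x \<in> GF c"
  have "x ^ (2 ^ (c * j)) = x"
  proof (induction j)
    case 0 then show ?case by simp
  next
    case (Suc j)
    have "x ^ (2 ^ (c * Suc j)) = (x ^ (2 ^ (c * j))) ^ (2 ^ c)"
      by (simp add: power_add power_mult[symmetric] mult.commute)
    also have "\<dots> = x" using Suc x by (simp add: GF_def)
    finally show ?case .
  qed
  then show "x \<in> GF (c * j)" by (simp add: GF_def)
qed


definition Bvec :: "nat \<Rightarrow> nat \<Rightarrow> (nat \<Rightarrow> K) set" where
  "Bvec c m = {b. (\<forall>e<m. b e \<in> GF c) \<and> (\<forall>e. m \<le> e \<longrightarrow> b e = 0)}"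

definition lin :: "K \<Rightarrow> nat \<Rightarrow> (nat \<Rightarrow> K) \<Rightarrow> K" where
  "lin \<beta> m b = (\<Sum>e<m. b e * \<beta> ^ e)"

definition indep :: "nat \<Rightarrow> K \<Rightarrow> nat \<Rightarrow> bool" where
  "indep c \<beta> m \<longleftrightarrow> (\<forall>b\<in>Bvec c m. lin \<beta> m b = 0 \<longrightarrow> (\<forall>e<m. b e = 0))"

lemma Bvec_add: "b \<in> Bvec c m \<Longrightarrow> b' \<in> Bvec c m \<Longrightarrow> b + b' \<in> Bvec c m"
  by (auto simp: Bvec_def)

lemma lin_add: "lin \<beta> m (b + b') = lin \<beta> m b + lin \<beta> m b'"
  by (simp add: lin_def sum.distrib algebra_simps)

lemma card_Bvec:
  assumes "c \<ge> 1"
  shows "card (Bvec c m) = 2 ^ (c * m)" "finite (Bvec c m)"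
proof -
  have bij: "bij_betw (\<lambda>b. restrict b {..<m}) (Bvec c m) (PiE {..<m} (\<lambda>_. GF c))"
  proof (rule bij_betwI[where g = "\<lambda>f e. if e < m then f e else 0"])
    show "(\<lambda>b. restrict b {..<m}) \<in> Bvec c m \<rightarrow> PiE {..<m} (\<lambda>_. GF c)"
      by (auto simp: Bvec_def)
    show "(\<lambda>f e. if e < m then f e else 0) \<in> PiE {..<m} (\<lambda>_. GF c) \<rightarrow> Bvec c m"
      by (auto simp: Bvec_def PiE_def Pi_def)
    show "(\<lambda>e. if e < m then restrict x {..<m} e else 0) = x" if "x \<in> Bvec c m" for x
      using that by (auto simp: Bvec_def fun_eq_iff)
    show "restrict (\<lambda>e. if e < m then y e else 0) {..<m} = y" if "y \<in> PiE {..<m} (\<lambda>_. GF c)" for y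
      using that by (auto simp: PiE_def extensional_def fun_eq_iff)
  qed
  have "card (PiE {..<m} (\<lambda>_. GF c)) = (2^c)^m"
    by (simp add: card_PiE GF_card[OF assms])
  then show "card (Bvec c m) = 2 ^ (c * m)"
    using bij_betw_same_card[OF bij] by (simp add: power_mult)
  show "finite (Bvec c m)"
    using bij_betw_finite[OF bij] GF_card(2)[OF assms] by (simp add: finite_PiE)
qed

lemma lin_extend:
  assumes "b \<in> Bvec c m" "m \<le> m'"
  shows "lin \<beta> m' b = lin \<beta> m b"
  unfolding lin_def using assms
  by (intro sum.mono_neutral_right) (auto simp: Bvec_def)

lemma Bvec_mono: "b \<in> Bvec c m \<Longrightarrow> m \<le> m' \<Longrightarrow> b \<in> Bvec c m'"
proof -
  assume b: "b \<in> Bvec c m" and mm: "m \<le> m'"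
  show ?thesis unfolding Bvec_def
  proof (intro CollectI conjI allI impI)
    fix e assume "e < m'"
    show "b e \<in> GF c"
    proof (cases "e < m")
      case True then show ?thesis using b by (simp add: Bvec_def)
    next
      case False then show ?thesis using b by (simp add: Bvec_def)
    qed
  next
    fix e assume "m' \<le> e" then show "b e = 0" using b mm by (simp add: Bvec_def)
  qed
qed

lemma indep_mono:
  assumes "m \<le> m'" "indep c \<beta> m'"
  shows "indep c \<beta> m"
  unfolding indep_def
proof (intro ballI impI allI)
  fix b e assume b: "b \<in> Bvec c m" and l: "lin \<beta> m b = 0" and e: "e < m"
  have "b \<in> Bvec c m'" using Bvec_mono[OF b assms(1)] .
  moreover have "lin \<beta> m' b = 0" using lin_extend[OF b assms(1)] l by simp
  ultimately show "b e = 0" using assms e unfolding indep_def by auto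
qed

lemma lin_in_GF:
  assumes "b \<in> Bvec c m" "\<beta> \<in> GF (c * j)"
  shows "lin \<beta> m b \<in> GF (c * j)"
  unfolding lin_def using assms GF_mono[of c j] by (auto simp: Bvec_def intro!: GF_sum GF_mult)

lemma indep_bound:
  assumes c: "c \<ge> 1" and j: "j \<ge> 1" and beta: "\<beta> \<in> GF (c * j)" and ind: "indep c \<beta> m"
  shows "m \<le> j"
proof -
  have inj: "inj_on (lin \<beta> m) (Bvec c m)"
  proof (rule inj_onI)
    fix b b' assume b: "b \<in> Bvec c m" and b': "b' \<in> Bvec c m" and eq: "lin \<beta> m b = lin \<beta> m b'"
    have "lin \<beta> m (b + b') = 0" using eq by (simp add: lin_add)
    then have "\<forall>e<m. (b + b') e = 0" using ind Bvec_add[OF b b'] unfolding indep_def by blast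
    then have "\<forall>e<m. b e = b' e"
      by (metis K_add_self add_right_cancel plus_fun_apply)
    moreover have "\<forall>e. m \<le> e \<longrightarrow> b e = b' e" using b b' by (simp add: Bvec_def)
    ultimately show "b = b'" by (metis ext not_le)
  qed
  have sub: "lin \<beta> m ` Bvec c m \<subseteq> GF (c * j)" using lin_in_GF beta by blast
  have cj: "c * j \<ge> 1" using c j by simp
  have "card (Bvec c m) \<le> card (GF (c * j))"
    using card_inj_on_le[OF inj sub GF_card(2)[OF cj]] .
  then have "(2::nat) ^ (c * m) \<le> 2 ^ (c * j)" using card_Bvec[OF c] GF_card[OF cj] by simp
  then have "c * m \<le> c * j" by simp
  then show "m \<le> j" using c by simp
qed

lemma lin_roots_card:
  assumes b: "b \<in> Bvec c m" and nz: "b \<noteq> 0" and m: "m \<ge> 1"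
  shows "finite {x. lin x m b = 0}" "card {x. lin x m b = 0} < m"
proof -
  define P where "P = (\<Sum>e<m. Polynomial.monom (b e) e)"
  have coeffP: "poly.coeff P e = b e" for e
  proof (cases "e < m")
    case True then show ?thesis unfolding P_def coeff_sum by (simp add: coeff_monom)
  next
    case False then show ?thesis using b unfolding P_def coeff_sum Bvec_def by (simp add: coeff_monom)
  qed
  have "P \<noteq> 0"
  proof
    assume "P = 0"
    then have "b e = 0" for e using coeffP[of e] by simp
    then show False using nz by auto
  qed
  have degP: "Polynomial.degree P \<le> m - 1"
    unfolding P_def by (rule degree_sum_le) (auto intro: order.trans[OF degree_monom_le])
  have roots: "{x. lin x m b = 0} = {x. poly P x = 0}"
    unfolding P_def lin_def by (simp add: poly_sum poly_monom)
  show "finite {x. lin x m b = 0}" using roots poly_roots_finite[OF \<open>P \<noteq> 0\<close>] by simp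
  have "card {x. lin x m b = 0} \<le> Polynomial.degree P"
    using roots card_poly_roots_bound[OF \<open>P \<noteq> 0\<close>] by simp
  then show "card {x. lin x m b = 0} < m" using degP m by linarith
qed

lemma exists_beta:
  assumes c: "c \<ge> 1" and l: "l \<ge> 1"
  shows "\<exists>\<beta>\<in>GF (c * (2 * l)). indep c \<beta> l"
proof -
  define Bad where "Bad = (\<Union>b\<in>Bvec c l - {0}. {x. lin x l b = 0})"
  have finB: "finite (Bvec c l - {0})" using card_Bvec(2)[OF c] by simp
  have "card Bad \<le> (\<Sum>b\<in>Bvec c l - {0}. card {x. lin x l b = 0})"
    unfolding Bad_def by (rule card_UN_le[OF finB])
  also have "\<dots> \<le> (\<Sum>b\<in>Bvec c l - {0}. l)"
    by (rule sum_mono) (use lin_roots_card[OF _ _ l] in \<open>auto intro: less_imp_le\<close>)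
  also have "\<dots> \<le> card (Bvec c l) * l"
    using finB by (simp add: card_Diff1_le)
  also have "\<dots> = 2 ^ (c * l) * l" using card_Bvec[OF c] by simp
  also have "\<dots> < 2 ^ (c * l) * 2 ^ (c * l)"
  proof -
    have "l < 2 ^ l" by (rule less_exp)
    also have "\<dots> \<le> 2 ^ (c * l)" using c by (intro power_increasing) auto
    finally show ?thesis by simp
  qed
  also have "\<dots> = card (GF (c * (2 * l)))"
    using GF_card[of "c * (2 * l)"] c l by (simp add: power_add[symmetric] mult_2 algebra_simps)
  finally have lt: "card Bad < card (GF (c * (2 * l)))" .
  have "\<not> GF (c * (2 * l)) \<subseteq> Bad"
  proof
    assume sub: "GF (c * (2 * l)) \<subseteq> Bad"
    have "finite Bad" unfolding Bad_def using finB lin_roots_card(1)[OF _ _ l] by blast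
    then have "card (GF (c * (2 * l))) \<le> card Bad" using card_mono sub by blast
    then show False using lt by simp
  qed
  then obtain \<beta> where beta: "\<beta> \<in> GF (c * (2 * l))" "\<beta> \<notin> Bad" by blast
  have "indep c \<beta> l" unfolding indep_def
  proof (intro ballI impI allI)
    fix b e assume b: "b \<in> Bvec c l" and z: "lin \<beta> l b = 0" and e: "e < l"
    have "b = 0"
    proof (rule ccontr)
      assume "b \<noteq> 0"
      then have "\<beta> \<in> Bad" unfolding Bad_def using b z by blast
      then show False using beta by simp
    qed
    then show "b e = 0" by simp
  qed
  then show ?thesis using beta by blast
qed

lemma exists_n:
  assumes c: "c \<ge> 1" and l: "l \<ge> 1" and beta: "\<beta> \<in> GF (c * M)" and M: "M \<ge> 1"
    and ind: "indep c \<beta> l"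
  shows "\<exists>n. l \<le> n \<and> n \<le> M \<and> indep c \<beta> n \<and> \<beta> ^ n \<in> lin \<beta> n ` Bvec c n"
proof -
  have ex: "\<not> indep c \<beta> (Suc M)" using indep_bound[OF c M beta] by fastforce
  define n where "n = (LEAST m. \<not> indep c \<beta> (Suc m))"
  have n1: "\<not> indep c \<beta> (Suc n)" unfolding n_def by (rule LeastI[of _ M]) (use ex in auto)
  have indn: "indep c \<beta> n"
  proof (cases n)
    case 0 then show ?thesis by (simp add: indep_def)
  next
    case (Suc m)
    have "m < n" using Suc by simp
    then have "\<not> \<not> indep c \<beta> (Suc m)" unfolding n_def using not_less_Least by blast
    then show ?thesis using Suc by simp
  qed
  have ln: "l \<le> n"
  proof (rule ccontr)
    assume "\<not> l \<le> n"
    then have "Suc n \<le> l" by simp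
    then have "indep c \<beta> (Suc n)" using indep_mono ind by blast
    then show False using n1 by simp
  qed
  have nM: "n \<le> M" using indep_bound[OF c M beta indn] .
  obtain b where b: "b \<in> Bvec c (Suc n)" and z: "lin \<beta> (Suc n) b = 0" and nz: "\<exists>e<Suc n. b e \<noteq> 0"
    using n1 unfolding indep_def by blast
  have bn: "b n \<noteq> 0"
  proof
    assume bn0: "b n = 0"
    have b': "b \<in> Bvec c n" unfolding Bvec_def
    proof (intro CollectI conjI allI impI)
      fix e assume "e < n" then show "b e \<in> GF c" using b by (simp add: Bvec_def)
    next
      fix e assume "n \<le> e" then show "b e = 0" using b bn0
        by (cases "e = n") (auto simp: Bvec_def)
    qed
    have "lin \<beta> n b = 0" using lin_extend[OF b', of "Suc n"] z by simp
    then have "\<forall>e<n. b e = 0" using indn b' unfolding indep_def by blast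
    then show False using nz bn0 less_Suc_eq by auto
  qed
  define b' where "b' = (\<lambda>e. if e < n then b e / b n else 0)"
  have b'B: "b' \<in> Bvec c n" using b unfolding b'_def Bvec_def by auto
  have "lin \<beta> (Suc n) b = lin \<beta> n b + b n * \<beta> ^ n" by (simp add: lin_def)
  then have "b n * \<beta> ^ n = lin \<beta> n b" using z
    by (metis K_minus add.commute diff_add_cancel add_0)
  then have "\<beta> ^ n = lin \<beta> n b / b n" using bn by (simp add: field_simps)
  also have "\<dots> = lin \<beta> n b'" unfolding lin_def b'_def by (simp add: sum_divide_distrib)
  finally have "\<beta> ^ n \<in> lin \<beta> n ` Bvec c n" using b'B by blast
  then show ?thesis using ln nM indn by blast
qed


lemma lin_inj_indep:
  assumes ind: "indep c \<beta> m" and b: "b \<in> Bvec c m" and b': "b' \<in> Bvec c m"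
    and eq: "lin \<beta> m b = lin \<beta> m b'"
  shows "b = b'"
proof -
  have "lin \<beta> m (b + b') = 0" using eq by (simp add: lin_add)
  then have "\<forall>e<m. (b + b') e = 0" using ind Bvec_add[OF b b'] unfolding indep_def by blast
  then have "\<forall>e<m. b e = b' e"
    by (metis K_add_self add_right_cancel plus_fun_apply)
  moreover have "\<forall>e. m \<le> e \<longrightarrow> b e = b' e" using b b' by (simp add: Bvec_def)
  ultimately show "b = b'" by (metis ext not_le)
qed

locale spanF =
  fixes c n :: nat and \<beta> :: K
  assumes c1: "c \<ge> 1" and n1: "n \<ge> 1" and ind: "indep c \<beta> n"
    and red: "\<beta> ^ n \<in> lin \<beta> n ` Bvec c n"
begin

definition F where "F = lin \<beta> n ` Bvec c n"

lemma F_finite: "finite F"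
  unfolding F_def using card_Bvec(2)[OF c1] by simp

lemma F_card: "card F \<le> 2 ^ (c * n)"
  unfolding F_def using card_Bvec[OF c1] card_image_le by metis

lemma F_0[simp]: "0 \<in> F"
proof -
  have "(\<lambda>e. 0) \<in> Bvec c n" by (simp add: Bvec_def)
  moreover have "lin \<beta> n (\<lambda>e. 0) = 0" by (simp add: lin_def)
  ultimately show ?thesis unfolding F_def by (metis image_eqI)
qed

lemma F_add[simp]: "x \<in> F \<Longrightarrow> y \<in> F \<Longrightarrow> x + y \<in> F"
  unfolding F_def by (auto simp: lin_add[symmetric] intro!: imageI Bvec_add)

lemma F_smul:
  assumes s: "s \<in> GF c" and y: "y \<in> F"
  shows "s * y \<in> F"
proof -
  obtain b where b: "b \<in> Bvec c n" "y = lin \<beta> n b" using y unfolding F_def by blast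
  have "(\<lambda>e. s * b e) \<in> Bvec c n" using b s by (simp add: Bvec_def)
  moreover have "lin \<beta> n (\<lambda>e. s * b e) = s * y"
    using b by (simp add: lin_def sum_distrib_left mult.assoc)
  ultimately show ?thesis unfolding F_def by (metis image_eqI)
qed

lemma GF_sub_F: assumes s: "s \<in> GF c" shows "s \<in> F"
proof -
  have "(\<lambda>e. if e = 0 then s else 0) \<in> Bvec c n" using s n1 by (simp add: Bvec_def)
  moreover have "lin \<beta> n (\<lambda>e. if e = 0 then s else 0) = s"
  proof -
    have "lin \<beta> n (\<lambda>e. if e = 0 then s else 0) = (\<Sum>e<n. if e = 0 then s else 0)"
      unfolding lin_def by (rule sum.cong) auto
    also have "\<dots> = s" using n1 by (simp add: sum.delta')
    finally show ?thesis .
  qed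
  ultimately show ?thesis unfolding F_def by (metis image_eqI)
qed

lemma F_1[simp]: "1 \<in> F" using GF_sub_F[of 1] by simp

lemma F_sum[simp]: "(\<And>i. i \<in> I \<Longrightarrow> f i \<in> F) \<Longrightarrow> sum f I \<in> F"
  by (induction I rule: infinite_finite_induct) auto

lemma betan_F: "\<beta> ^ n \<in> F" using red unfolding F_def .

lemma F_beta_mult:
  assumes y: "y \<in> F" shows "\<beta> * y \<in> F"
proof -
  obtain b where b: "b \<in> Bvec c n" "y = lin \<beta> n b" using y unfolding F_def by blast
  define b2 where "b2 = (\<lambda>e. if e = 0 then 0 else b (e - 1))"
  define b3 where "b3 = (\<lambda>e. if e < n then b2 e else 0)"
  have "\<beta> * y = (\<Sum>e<n. b e * \<beta> ^ Suc e)"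
    using b by (simp add: lin_def sum_distrib_left algebra_simps)
  also have "\<dots> = (\<Sum>e<Suc n. b2 e * \<beta> ^ e)"
    unfolding b2_def by (subst sum.lessThan_Suc_shift) simp
  also have "\<dots> = (\<Sum>e<n. b2 e * \<beta> ^ e) + b2 n * \<beta> ^ n" by simp
  also have "(\<Sum>e<n. b2 e * \<beta> ^ e) = lin \<beta> n b3"
    unfolding lin_def b3_def by simp
  finally have eq: "\<beta> * y = lin \<beta> n b3 + b2 n * \<beta> ^ n" .
  have b3B: "b3 \<in> Bvec c n"
    using b unfolding b3_def b2_def Bvec_def by auto
  have b2n: "b2 n \<in> GF c" using b n1 unfolding b2_def Bvec_def by auto
  have "lin \<beta> n b3 \<in> F" using b3B unfolding F_def by blast
  moreover have "b2 n * \<beta> ^ n \<in> F" using F_smul[OF b2n betan_F] .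
  ultimately show ?thesis using eq by simp
qed

lemma F_pow_mult: "y \<in> F \<Longrightarrow> \<beta> ^ e * y \<in> F"
proof (induction e)
  case 0 then show ?case by simp
next
  case (Suc e)
  then show ?case using F_beta_mult[of "\<beta> ^ e * y"] by (simp add: mult.assoc)
qed

lemma F_mult[simp]:
  assumes x: "x \<in> F" and y: "y \<in> F" shows "x * y \<in> F"
proof -
  obtain b where b: "b \<in> Bvec c n" "x = lin \<beta> n b" using x unfolding F_def by blast
  have "x * y = (\<Sum>e<n. b e * (\<beta> ^ e * y))"
    using b by (simp add: lin_def sum_distrib_right mult.assoc)
  moreover have "b e * (\<beta> ^ e * y) \<in> F" if "e < n" for e
    using that b F_smul F_pow_mult y by (simp add: Bvec_def)
  ultimately show ?thesis by (auto intro!: F_sum)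
qed

lemma F_prod[simp]: "(\<And>i. i \<in> I \<Longrightarrow> f i \<in> F) \<Longrightarrow> prod f I \<in> F"
  by (induction I rule: infinite_finite_induct) auto

lemma F_power[simp]: "x \<in> F \<Longrightarrow> x ^ e \<in> F"
  by (induction e) auto

lemma beta_F[simp]: "\<beta> \<in> F" using F_beta_mult[OF F_1] by simp

lemma F_minus[simp]: "x \<in> F \<Longrightarrow> y \<in> F \<Longrightarrow> x - y \<in> F"
  by (simp add: K_minus)

lemma F_uminus[simp]: "x \<in> F \<Longrightarrow> - x \<in> F" by simp

lemma F_inverse[simp]:
  assumes y: "y \<in> F" shows "inverse y \<in> F"
proof (cases "y = 0")
  case True then show ?thesis by simp
next
  case False
  have inj: "inj_on (\<lambda>z. y * z) F" using False by (auto intro: inj_onI)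
  have sub: "(\<lambda>z. y * z) ` F \<subseteq> F" using y by auto
  have "(\<lambda>z. y * z) ` F = F" by (rule endo_inj_surj[OF F_finite sub inj])
  then obtain z where z: "z \<in> F" "y * z = 1" using F_1 by (metis imageE)
  then have "z = inverse y" using False by (metis inverse_unique)
  then show ?thesis using z by simp
qed

lemma F_divide[simp]: "x \<in> F \<Longrightarrow> y \<in> F \<Longrightarrow> x / y \<in> F"
  by (simp add: divide_inverse)

definition coord :: "K \<Rightarrow> nat \<Rightarrow> K" where
  "coord y = (THE b. b \<in> Bvec c n \<and> lin \<beta> n b = y)"

lemma coord_lin: assumes "b \<in> Bvec c n" shows "coord (lin \<beta> n b) = b"
  unfolding coord_def
  by (rule the_equality) (use assms lin_inj_indep[OF ind] in auto)

lemma coord_F: assumes "y \<in> F" shows "coord y \<in> Bvec c n" "lin \<beta> n (coord y) = y"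
  using assms coord_lin unfolding F_def by auto

definition tau :: "K \<Rightarrow> K" where "tau y = coord y (n - 1)"

lemma tau_GF: "y \<in> F \<Longrightarrow> tau y \<in> GF c"
  unfolding tau_def using coord_F(1) n1 by (simp add: Bvec_def)

lemma tau_lin:
  assumes fin: "finite J" and s: "\<And>j. j \<in> J \<Longrightarrow> s j \<in> GF c" and y: "\<And>j. j \<in> J \<Longrightarrow> y j \<in> F"
  shows "tau (\<Sum>j\<in>J. s j * y j) = (\<Sum>j\<in>J. s j * tau (y j))"
proof -
  define b where "b = (\<lambda>e. \<Sum>j\<in>J. s j * coord (y j) e)"
  have bB: "b \<in> Bvec c n"
    using coord_F(1)[OF y] s unfolding b_def Bvec_def by auto
  have "lin \<beta> n b = (\<Sum>j\<in>J. s j * lin \<beta> n (coord (y j)))"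
    unfolding b_def lin_def by (simp add: sum_distrib_right sum_distrib_left mult.assoc sum.swap[of _ J])
  also have "\<dots> = (\<Sum>j\<in>J. s j * y j)" using coord_F(2)[OF y] by simp
  finally have "coord (\<Sum>j\<in>J. s j * y j) = b" using coord_lin[OF bB] by simp
  then show ?thesis unfolding tau_def b_def by simp
qed

lemma tau_pow:
  assumes e: "e < n" shows "tau (\<beta> ^ e) = (if e = n - 1 then 1 else 0)"
proof -
  define b where "b = (\<lambda>e'. if e' = e then (1::K) else 0)"
  have bB: "b \<in> Bvec c n" using e unfolding b_def Bvec_def by auto
  have "lin \<beta> n b = (\<Sum>e'<n. if e' = e then \<beta> ^ e else 0)"
    unfolding lin_def b_def by (rule sum.cong) auto
  also have "\<dots> = \<beta> ^ e" using e by (simp add: sum.delta')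
  finally have "lin \<beta> n b = \<beta> ^ e" .
  then have "coord (\<beta> ^ e) = b" using coord_lin[OF bB] by simp
  then show ?thesis unfolding tau_def b_def by simp
qed

end


section \<open>Lagrange interpolation\<close>

definition lagr :: "'b set \<Rightarrow> ('b \<Rightarrow> 'a::field) \<Rightarrow> ('b \<Rightarrow> 'a) \<Rightarrow> 'a poly" where
  "lagr S \<gamma> y = (\<Sum>j\<in>S. Polynomial.smult (y j) (\<Prod>l\<in>S-{j}. [:- \<gamma> l / (\<gamma> j - \<gamma> l), 1 / (\<gamma> j - \<gamma> l):]))"

lemma poly_fac: "poly [:- a / d, 1 / d:] x = (x - a) / (d::'a::field)"
  by (simp add: diff_divide_distrib)

lemma poly_fac': "poly [:- (a / d), 1 / d:] x = (x - a) / (d::'a::field)"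
  by (simp add: diff_divide_distrib)

lemma poly_lagr_expand:
  "poly (lagr S \<gamma> y) x = (\<Sum>j\<in>S. y j * (\<Prod>l\<in>S-{j}. (x - \<gamma> l) / (\<gamma> j - \<gamma> l)))"
  unfolding lagr_def poly_sum poly_smult poly_prod by (simp only: poly_fac)

lemma poly_lagr:
  assumes fin: "finite S" and inj: "inj_on \<gamma> S" and i: "i \<in> S"
  shows "poly (lagr S \<gamma> y) (\<gamma> i) = y i"
proof -
  have "poly (lagr S \<gamma> y) (\<gamma> i) = (\<Sum>j\<in>S. y j * (\<Prod>l\<in>S-{j}. (\<gamma> i - \<gamma> l) / (\<gamma> j - \<gamma> l)))"
    by (rule poly_lagr_expand)
  also have "\<dots> = (\<Sum>j\<in>S. if j = i then y j else 0)"
  proof (rule sum.cong[OF refl])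
    fix j assume j: "j \<in> S"
    show "y j * (\<Prod>l\<in>S-{j}. (\<gamma> i - \<gamma> l) / (\<gamma> j - \<gamma> l)) = (if j = i then y j else 0)"
    proof (cases "j = i")
      case True
      have "(\<Prod>l\<in>S-{j}. (\<gamma> i - \<gamma> l) / (\<gamma> j - \<gamma> l)) = (\<Prod>l\<in>S-{j}. 1)"
      proof (rule prod.cong[OF refl])
        fix l assume l: "l \<in> S - {j}"
        then have "\<gamma> j \<noteq> \<gamma> l" using inj j by (metis DiffE inj_on_def singletonI)
        then show "(\<gamma> i - \<gamma> l) / (\<gamma> j - \<gamma> l) = 1" using True by simp
      qed
      then show ?thesis using True by simp
    next
      case False
      have "(\<Prod>l\<in>S-{j}. (\<gamma> i - \<gamma> l) / (\<gamma> j - \<gamma> l)) = 0"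
        using fin i False by (intro prod_zero) auto
      then show ?thesis using False by simp
    qed
  qed
  also have "\<dots> = y i" using fin i by (simp add: sum.delta')
  finally show ?thesis .
qed

lemma degree_lagr:
  assumes fin: "finite S"
  shows "Polynomial.degree (lagr S \<gamma> y) \<le> card S - 1"
proof -
  define fac where "fac j l = [:- \<gamma> l / (\<gamma> j - \<gamma> l), 1 / (\<gamma> j - \<gamma> l):]" for j l
  have lagr_eq: "lagr S \<gamma> y = (\<Sum>j\<in>S. Polynomial.smult (y j) (\<Prod>l\<in>S-{j}. fac j l))"
    unfolding lagr_def fac_def ..
  have dfac: "Polynomial.degree (fac j l) \<le> 1" for j l
    unfolding fac_def by (rule order.trans[OF degree_pCons_le]) simp
  have "Polynomial.degree (Polynomial.smult (y j) (\<Prod>l\<in>S-{j}. fac j l)) \<le> card S - 1"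
    if j: "j \<in> S" for j
  proof -
    have "Polynomial.degree (\<Prod>l\<in>S-{j}. fac j l) \<le> (\<Sum>l\<in>S-{j}. Polynomial.degree (fac j l))"
      using degree_prod_sum_le[of "S-{j}" "fac j"] fin by (simp add: o_def)
    also have "\<dots> \<le> (\<Sum>l\<in>S-{j}. 1)"
      by (rule sum_mono) (rule dfac)
    also have "\<dots> = card S - 1" using fin j by simp
    finally show ?thesis using degree_smult_le order.trans by blast
  qed
  then show ?thesis unfolding lagr_eq by (intro degree_sum_le[OF fin])
qed

lemma lagr_eval:
  fixes h :: "'a::field poly"
  assumes fin: "finite S" and inj: "inj_on \<gamma> S" and deg: "Polynomial.degree h < card S"
  shows "poly h x = (\<Sum>j\<in>S. poly h (\<gamma> j) * (\<Prod>l\<in>S-{j}. (x - \<gamma> l) / (\<gamma> j - \<gamma> l)))"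
proof -
  have cardS: "card (\<gamma> ` S) = card S" using card_image[OF inj] .
  have "h = lagr S \<gamma> (\<lambda>j. poly h (\<gamma> j))"
  proof (rule poly_eqI_degree[of "\<gamma> ` S"])
    fix z assume "z \<in> \<gamma> ` S"
    then obtain i where "i \<in> S" "z = \<gamma> i" by blast
    then show "poly h z = poly (lagr S \<gamma> (\<lambda>j. poly h (\<gamma> j))) z"
      using poly_lagr[OF fin inj] by simp
  next
    show "Polynomial.degree h < card (\<gamma> ` S)" using deg cardS by simp
  next
    have "Polynomial.degree (lagr S \<gamma> (\<lambda>j. poly h (\<gamma> j))) \<le> card S - 1" by (rule degree_lagr[OF fin])
    then show "Polynomial.degree (lagr S \<gamma> (\<lambda>j. poly h (\<gamma> j))) < card (\<gamma> ` S)"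
      using deg cardS by linarith
  qed
  then have "poly h x = poly (lagr S \<gamma> (\<lambda>j. poly h (\<gamma> j))) x" by simp
  also have "\<dots> = (\<Sum>j\<in>S. poly h (\<gamma> j) * (\<Prod>l\<in>S-{j}. (x - \<gamma> l) / (\<gamma> j - \<gamma> l)))"
    by (rule poly_lagr_expand)
  finally show ?thesis .
qed

section \<open>Uniform distributions\<close>

lemma map_pmf_of_set_fibers:
  assumes finA: "finite A" and neA: "A \<noteq> {}" and finC: "finite C"
    and img: "g ` A \<subseteq> C" and fib: "\<And>c. c \<in> C \<Longrightarrow> card {x\<in>A. g x = c} = \<kappa>"
  shows "map_pmf g (pmf_of_set A) = pmf_of_set C"
proof -
  have neC: "C \<noteq> {}" using img neA by blast
  have A_eq: "A = (\<Union>c\<in>C. {x\<in>A. g x = c})" using img by auto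
  have "card A = (\<Sum>c\<in>C. card {x\<in>A. g x = c})"
    by (subst A_eq, rule card_UN_disjoint) (use finC finA in auto)
  also have "\<dots> = \<kappa> * card C" using fib by simp
  finally have cA: "card A = \<kappa> * card C" .
  have cApos: "card A > 0" using finA neA by (simp add: card_gt_0_iff)
  show ?thesis
  proof (rule pmf_eqI)
    fix c
    have "pmf (map_pmf g (pmf_of_set A)) c = measure (pmf_of_set A) (g -` {c})"
      by (simp add: pmf_map)
    also have "\<dots> = real (card (g -` {c} \<inter> A)) / real (card A)"
      using finA neA by (simp add: measure_pmf_of_set Int_commute)
    also have "g -` {c} \<inter> A = {x\<in>A. g x = c}" by auto
    finally have eq: "pmf (map_pmf g (pmf_of_set A)) c = real (card {x\<in>A. g x = c}) / real (card A)" .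
    show "pmf (map_pmf g (pmf_of_set A)) c = pmf (pmf_of_set C) c"
    proof (cases "c \<in> C")
      case True
      have "\<kappa> > 0" using cA cApos by (cases \<kappa>) auto
      then show ?thesis using eq True fib[OF True] cA neC finC by (simp add: pmf_of_set)
    next
      case False
      then have "{x\<in>A. g x = c} = {}" using img by auto
      then have "card {x\<in>A. g x = c} = 0" by (metis card.empty)
      then have "pmf (map_pmf g (pmf_of_set A)) c = 0" using eq by simp
      then show ?thesis using False neC finC by (simp add: pmf_of_set)
    qed
  qed
qed

lemma fibers_equal:
  fixes g :: "('x \<Rightarrow> K) \<Rightarrow> ('z \<Rightarrow> K)"
  assumes addA: "\<And>R S. R \<in> A \<Longrightarrow> S \<in> A \<Longrightarrow> R + S \<in> A"
    and aff: "\<And>R S U. g (R + S + U) = g R + g S + g U"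
    and c: "c \<in> g ` A" and c': "c' \<in> g ` A"
  shows "card {x\<in>A. g x = c} = card {x\<in>A. g x = c'}"
proof -
  obtain Rc where Rc: "Rc \<in> A" "g Rc = c" using c by blast
  obtain Rc' where Rc': "Rc' \<in> A" "g Rc' = c'" using c' by blast
  define s where "s = Rc + Rc'"
  have sA: "s \<in> A" unfolding s_def using addA Rc Rc' by blast
  have selfz: "v + v = 0" for v :: "'z \<Rightarrow> K" by (rule ext) (simp only: plus_fun_apply K_add_self zero_fun_apply)
  have selfz2: "v + v = 0" for v :: "'x \<Rightarrow> K" by (rule ext) (simp only: plus_fun_apply K_add_self zero_fun_apply)
  have gs: "g (R + s) = g R + c + c'" for R
    unfolding s_def using aff[of R Rc Rc'] Rc Rc' by (simp add: add.assoc)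
  have inv: "R + s + s = R" for R by (simp add: add.assoc selfz2)
  have m1: "R + s \<in> {x\<in>A. g x = c'}" if R: "R \<in> {x\<in>A. g x = c}" for R
  proof -
    have "R \<in> A" "g R = c" using R by auto
    then have "g (R + s) = c + c + c'" using gs by simp
    also have "\<dots> = c'" by (simp only: selfz add_0)
    finally show ?thesis using addA[OF \<open>R \<in> A\<close> sA] by simp
  qed
  have m2: "R + s \<in> {x\<in>A. g x = c}" if R: "R \<in> {x\<in>A. g x = c'}" for R
  proof -
    have "R \<in> A" "g R = c'" using R by auto
    then have "g (R + s) = c' + c + c'" using gs by simp
    also have "\<dots> = c + (c' + c')" by (simp only: add.commute add.left_commute add.assoc)
    also have "\<dots> = c" by (simp only: selfz add_0_right)
    finally show ?thesis using addA[OF \<open>R \<in> A\<close> sA] by simp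
  qed
  have "bij_betw (\<lambda>R. R + s) {x\<in>A. g x = c} {x\<in>A. g x = c'}"
    by (rule bij_betwI[where g = "\<lambda>R. R + s"]) (use m1 m2 inv in auto)
  then show ?thesis by (rule bij_betw_same_card)
qed



section \<open>Bit encodings\<close>

lemma card_bool_lists: "card {xs::bool list. length xs = L} = 2 ^ L"
  "finite {xs::bool list. length xs = L}"
proof -
  have eq: "{xs::bool list. length xs = L} = {xs. set xs \<subseteq> UNIV \<and> length xs = L}" by simp
  show "card {xs::bool list. length xs = L} = 2 ^ L"
    by (subst eq, subst card_lists_length_eq) auto
  show "finite {xs::bool list. length xs = L}"
    by (subst eq, rule finite_lists_length_eq) auto
qed

lemma exists_enc:
  assumes fin: "finite S" and card: "card S \<le> 2 ^ L"
  shows "\<exists>enc :: 'a \<Rightarrow> bool list. inj_on enc S \<and> (\<forall>x. length (enc x) = L)"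
proof -
  obtain f where f: "f ` S \<subseteq> {xs::bool list. length xs = L}" "inj_on f S"
    using card_le_inj[OF fin card_bool_lists(2)] card card_bool_lists(1) by metis
  define enc where "enc x = (if x \<in> S then f x else replicate L False)" for x
  have "inj_on enc S" using f(2) unfolding enc_def inj_on_def by auto
  moreover have "\<forall>x. length (enc x) = L" using f(1) unfolding enc_def by auto
  ultimately show ?thesis by blast
qed

lemma exists_bij_enc:
  assumes fin: "finite S" and card: "card S = 2 ^ L"
  shows "\<exists>enc :: 'a \<Rightarrow> bool list. inj_on enc S \<and> (\<forall>x. length (enc x) = L)
           \<and> enc ` S = {xs. length xs = L}"
proof -
  obtain enc :: "'a \<Rightarrow> bool list" where e: "inj_on enc S" "\<forall>x. length (enc x) = L"
    using exists_enc[OF fin] card by auto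
  have "enc ` S = {xs. length xs = L}"
  proof (rule card_subset_eq[OF card_bool_lists(2)])
    show "enc ` S \<subseteq> {xs. length xs = L}" using e(2) by auto
    show "card (enc ` S) = card {xs::bool list. length xs = L}"
      using card_image[OF e(1)] card card_bool_lists(1) by simp
  qed
  then show ?thesis using e by blast
qed

lemma take_drop_concat:
  assumes "\<forall>x\<in>set xs. length x = c" "u < length xs"
  shows "take c (drop (u * c) (concat xs)) = xs ! u"
  using assms
proof (induction xs arbitrary: u)
  case Nil then show ?case by simp
next
  case (Cons x xs)
  show ?case
  proof (cases u)
    case 0 then show ?thesis using Cons.prems by simp
  next
    case (Suc u')
    have "drop (u * c) (concat (x # xs)) = drop (u' * c) (concat xs)"
      using Cons.prems Suc by simp
    then show ?thesis using Cons Suc by simp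
  qed
qed

lemma length_concat_const:
  assumes "\<forall>x\<in>set xs. length x = c"
  shows "length (concat xs) = length xs * c"
  using assms by (induction xs) auto

lemma concat_blocks:
  assumes "length xs = n * c"
  shows "concat (map (\<lambda>i. take c (drop (i * c) xs)) [0..<n]) = xs"
  using assms
proof (induction n arbitrary: xs)
  case 0 then show ?case by simp
next
  case (Suc n)
  have l: "length (drop c xs) = n * c" using Suc.prems by simp
  have "map (\<lambda>i. take c (drop (i * c) xs)) [0..<Suc n]
        = take c xs # map (\<lambda>i. take c (drop (i * c) (drop c xs))) [0..<n]"
    by (simp add: upt_conv_Cons map_Suc_upt[symmetric] del: upt_Suc) (simp add: add.commute)
  then show ?case using Suc.IH[OF l] by simp
qed

definition dig :: "nat \<Rightarrow> nat \<Rightarrow> nat \<Rightarrow> nat" where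
  "dig nn q i = i div nn ^ q mod nn"

lemma dig_less: "nn > 0 \<Longrightarrow> dig nn q i < nn"
  by (simp add: dig_def)

lemma dig_Suc: "dig nn (Suc q) i = dig nn q (i div nn)"
  by (simp add: dig_def div_mult2_eq)

lemma digits_inj:
  assumes "nn > 0" "i < nn ^ d" "i' < nn ^ d" "\<forall>q<d. dig nn q i = dig nn q i'"
  shows "i = i'"
  using assms(2-)
proof (induction d arbitrary: i i')
  case 0 then show ?case by simp
next
  case (Suc d)
  have m: "i mod nn = i' mod nn" using Suc.prems(3)[rule_format, of 0] by (simp add: dig_def)
  have "i div nn < nn ^ d" using Suc.prems(1) assms(1)
    by (simp add: less_mult_imp_div_less mult.commute)
  moreover have "i' div nn < nn ^ d" using Suc.prems(2) assms(1)
    by (simp add: less_mult_imp_div_less mult.commute)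
  moreover have "\<forall>q<d. dig nn q (i div nn) = dig nn q (i' div nn)"
    using Suc.prems(3) by (simp add: dig_Suc[symmetric])
  ultimately have "i div nn = i' div nn" using Suc.IH by blast
  then show ?case using m by (metis div_mult_mod_eq)
qed


context spanF begin

definition polyF :: "K poly \<Rightarrow> bool" where "polyF p \<longleftrightarrow> (\<forall>e. poly.coeff p e \<in> F)"

lemma polyF_0[simp]: "polyF 0" by (simp add: polyF_def)

lemma polyF_pCons[simp]: "a \<in> F \<Longrightarrow> polyF p \<Longrightarrow> polyF (pCons a p)"
  by (auto simp: polyF_def coeff_pCons split: nat.split)

lemma polyF_1[simp]: "polyF 1" by (simp add: one_pCons)

lemma polyF_add[simp]: "polyF p \<Longrightarrow> polyF q \<Longrightarrow> polyF (p + q)"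
  by (simp add: polyF_def)

lemma polyF_mult[simp]: "polyF p \<Longrightarrow> polyF q \<Longrightarrow> polyF (p * q)"
  unfolding polyF_def coeff_mult by (auto intro!: F_sum)

lemma polyF_smult[simp]: "a \<in> F \<Longrightarrow> polyF p \<Longrightarrow> polyF (Polynomial.smult a p)"
  by (simp add: polyF_def)

lemma polyF_sum[simp]: "(\<And>i. i \<in> I \<Longrightarrow> polyF (f i)) \<Longrightarrow> polyF (sum f I)"
  by (induction I rule: infinite_finite_induct) auto

lemma polyF_prod[simp]: "(\<And>i. i \<in> I \<Longrightarrow> polyF (f i)) \<Longrightarrow> polyF (prod f I)"
  by (induction I rule: infinite_finite_induct) auto

lemma polyF_lagr:
  assumes "\<And>j. j \<in> S \<Longrightarrow> \<gamma> j \<in> F" "\<And>j. j \<in> S \<Longrightarrow> y j \<in> F"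
  shows "polyF (lagr S \<gamma> y)"
  unfolding lagr_def using assms by (auto intro!: polyF_sum polyF_smult polyF_prod polyF_pCons)

end

lemma poly_sum_lt:
  fixes p :: "K poly"
  assumes "Polynomial.degree p < t"
  shows "poly p x = (\<Sum>r<t. poly.coeff p r * x ^ r)"
proof -
  have "poly p x = (\<Sum>r\<le>Polynomial.degree p. poly.coeff p r * x ^ r)" by (rule Polynomial.poly_altdef)
  also have "\<dots> = (\<Sum>r<t. poly.coeff p r * x ^ r)"
    using assms by (intro sum.mono_neutral_left) (auto simp: coeff_eq_0)
  finally show ?thesis .
qed

definition fs :: "'x set \<Rightarrow> K set \<Rightarrow> ('x \<Rightarrow> K) set" where
  "fs E S = {V. (\<forall>p\<in>E. V p \<in> S) \<and> (\<forall>p. p \<notin> E \<longrightarrow> V p = 0)}"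

lemma fs_finite:
  assumes "finite E" "finite S"
  shows "finite (fs E S)"
proof -
  have "fs E S \<subseteq> (\<lambda>f x. if x \<in> E then f x else 0) ` PiE E (\<lambda>_. S)"
  proof
    fix V assume V: "V \<in> fs E S"
    have "restrict V E \<in> PiE E (\<lambda>_. S)" using V by (auto simp: fs_def)
    moreover have "V = (\<lambda>x. if x \<in> E then restrict V E x else 0)" using V by (auto simp: fs_def fun_eq_iff)
    ultimately show "V \<in> (\<lambda>f x. if x \<in> E then f x else 0) ` PiE E (\<lambda>_. S)" by blast
  qed
  moreover have "finite (PiE E (\<lambda>_. S))" using assms by (simp add: finite_PiE)
  ultimately show ?thesis using finite_subset by blast
qed

lemma fs_zero: "0 \<in> S \<Longrightarrow> (\<lambda>_. 0) \<in> fs E S"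
  by (simp add: fs_def)

lemma fs_add:
  assumes "\<And>x y. x \<in> S \<Longrightarrow> y \<in> S \<Longrightarrow> x + y \<in> S"
  shows "R \<in> fs E S \<Longrightarrow> R' \<in> fs E S \<Longrightarrow> R + R' \<in> fs E S"
  using assms by (simp add: fs_def)


lemma K_cancel3: "(e::K) + (x + y + z) = (e + x) + (e + y) + (e + z)"
proof -
  have "(e + x) + (e + y) + (e + z) = (e + e) + e + (x + y + z)" by (simp only: add_ac)
  then show ?thesis by simp
qed

locale pir = spanF c n \<beta> for c n \<beta> +
  fixes k d t w N nn l LF :: nat and \<alpha> :: "nat \<Rightarrow> K" and encB encF :: "K \<Rightarrow> bool list"
  assumes kdt: "k = d * t + l" and l1: "l \<ge> 1" and ln: "l \<le> n" and t1: "t \<ge> 1"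
    and \<alpha>B: "\<And>j. j < k \<Longrightarrow> \<alpha> j \<in> GF c" and \<alpha>inj: "inj_on \<alpha> {..<k}" and \<beta>B: "\<beta> \<notin> GF c"
    and nn0: "nn > 0" and Nn: "N \<le> nn ^ d"
    and encB_inj: "inj_on encB (GF c)" and encB_len: "\<And>x. length (encB x) = c"
    and encB_img: "encB ` GF c = {xs. length xs = c}"
    and encF_inj: "inj_on encF F" and encF_len: "\<And>x. length (encF x) = LF"
begin

definition m where "m = d * nn"

definition Ev :: "nat \<Rightarrow> nat \<Rightarrow> K" where
  "Ev i a = (if a mod nn = dig nn (a div nn) i then 1 else 0)"

definition shv :: "(nat \<times> nat \<Rightarrow> K) \<Rightarrow> nat \<Rightarrow> nat \<Rightarrow> nat \<Rightarrow> K" where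
  "shv R i j a = Ev i a + (\<Sum>r<t. R (r, a) * (\<alpha> j - \<beta>) ^ Suc r)"

definition RS where "RS = fs ({..<t} \<times> {..<m}) F"

definition encS :: "(nat \<Rightarrow> K) \<Rightarrow> bool list" where
  "encS v = concat (map (\<lambda>a. encF (v a)) [0..<m])"

definition Share :: "nat \<Rightarrow> bool list list pmf" where
  "Share i = map_pmf (\<lambda>R. map (\<lambda>j. encS (shv R i j)) [0..<k]) (pmf_of_set RS)"

lemma Ev_F[simp]: "Ev i a \<in> F" by (simp add: Ev_def)

lemma alpha_F[simp]: "j < k \<Longrightarrow> \<alpha> j \<in> F" using \<alpha>B GF_sub_F by blast

lemma alpha_ne_beta: "j < k \<Longrightarrow> \<alpha> j - \<beta> \<noteq> 0"
proof
  assume j: "j < k" and z: "\<alpha> j - \<beta> = 0"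
  then have "\<beta> = \<alpha> j" by simp
  then show False using \<alpha>B[OF j] \<beta>B by simp
qed

lemma RS_finite: "finite RS" unfolding RS_def by (rule fs_finite) (auto simp: F_finite)
lemma RS_ne: "(\<lambda>_. 0) \<in> RS" unfolding RS_def by (rule fs_zero) simp
lemma RS_add: "R \<in> RS \<Longrightarrow> R' \<in> RS \<Longrightarrow> R + R' \<in> RS" unfolding RS_def by (rule fs_add) auto

lemma shv_F: assumes "R \<in> RS" "j < k" shows "shv R i j a \<in> F"
proof -
  have "R (r, a) \<in> F" for r
    using assms(1) by (cases "r < t \<and> a < m") (auto simp: RS_def fs_def)
  then show ?thesis unfolding shv_def using assms(2) by (auto intro!: F_sum)
qed

lemma encS_cong: "(\<And>a. a < m \<Longrightarrow> v a = v' a) \<Longrightarrow> encS v = encS v'"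
  unfolding encS_def by (intro arg_cong[where f = concat] map_cong) auto

definition gT :: "nat set \<Rightarrow> nat \<Rightarrow> (nat \<times> nat \<Rightarrow> K) \<Rightarrow> (nat \<times> nat \<Rightarrow> K)" where
  "gT T i R p = (if fst p \<in> T \<and> snd p < m then shv R i (fst p) (snd p) else 0)"

lemma gT_aff: "gT T i (R + S + U) = gT T i R + gT T i S + gT T i U"
proof (rule ext)
  fix p
  show "gT T i (R + S + U) p = (gT T i R + gT T i S + gT T i U) p"
  proof (cases "fst p \<in> T \<and> snd p < m")
    case True
    have eq: "shv (R + S + U) i (fst p) (snd p) = shv R i (fst p) (snd p) + shv S i (fst p) (snd p) + shv U i (fst p) (snd p)"
      unfolding shv_def plus_fun_apply distrib_right sum.distrib by (rule K_cancel3)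
    show ?thesis using True eq by (simp add: gT_def)
  next
    case False
    have z: "gT T i Rx p = 0" for Rx unfolding gT_def using False by (simp only: if_False)
    show ?thesis by (simp only: plus_fun_apply z add_0)
  qed
qed

lemma gT_img:
  assumes T: "T \<subseteq> {..<k}"
  shows "gT T i ` RS \<subseteq> fs (T \<times> {..<m}) F"
proof
  fix V assume "V \<in> gT T i ` RS"
  then obtain R where R: "R \<in> RS" "V = gT T i R" by blast
  show "V \<in> fs (T \<times> {..<m}) F" unfolding fs_def
  proof (intro CollectI conjI ballI allI impI)
    fix p assume p: "p \<in> T \<times> {..<m}"
    then have "fst p < k" using T by auto
    then show "V p \<in> F" using R p shv_F by (auto simp: gT_def)
  next
    fix p assume "p \<notin> T \<times> {..<m}"
    then show "V p = 0" using R by (auto simp: gT_def mem_Times_iff)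
  qed
qed

end

context pir begin

lemma gT_surj:
  assumes T: "T \<subseteq> {..<k}" and cT: "card T \<le> t" and V: "V \<in> fs (T \<times> {..<m}) F"
  shows "V \<in> gT T i ` RS"
proof -
  have finT: "finite T" using T finite_subset by blast
  define \<gamma> where "\<gamma> j = \<alpha> j - \<beta>" for j
  define La where "La a = lagr T \<gamma> (\<lambda>j. (V (j, a) - Ev i a) / \<gamma> j)" for a
  define R where "R p = (if fst p < t \<and> snd p < m then poly.coeff (La (snd p)) (fst p) else 0)" for p
  have \<gamma>F: "\<gamma> j \<in> F" if "j \<in> T" for j using that T unfolding \<gamma>_def by auto
  have \<gamma>nz: "\<gamma> j \<noteq> 0" if "j \<in> T" for j using that T alpha_ne_beta unfolding \<gamma>_def by auto
  have \<gamma>inj: "inj_on \<gamma> T"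
  proof (rule inj_onI)
    fix x y assume "x \<in> T" "y \<in> T" "\<gamma> x = \<gamma> y"
    then have "\<alpha> x = \<alpha> y" "x \<in> {..<k}" "y \<in> {..<k}" using T unfolding \<gamma>_def by auto
    then show "x = y" using \<alpha>inj by (simp add: inj_on_def)
  qed
  have VF: "V (j, a) \<in> F" if "j \<in> T" "a < m" for j a using V that by (auto simp: fs_def)
  have pF: "polyF (La a)" if "a < m" for a
    unfolding La_def using that by (intro polyF_lagr) (auto simp: \<gamma>F VF)
  have RRS: "R \<in> RS"
    unfolding RS_def fs_def R_def using pF by (auto simp: polyF_def)
  have degLa: "Polynomial.degree (La a) < t" for a
  proof -
    have "Polynomial.degree (La a) \<le> card T - 1" unfolding La_def by (rule degree_lagr[OF finT])
    then show ?thesis using cT t1 by linarith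
  qed
  have "gT T i R = V"
  proof (rule ext)
    fix p :: "nat \<times> nat"
    obtain j a where p: "p = (j, a)" by fastforce
    show "gT T i R p = V p"
    proof (cases "j \<in> T \<and> a < m")
      case True
      have "(\<Sum>r<t. R (r, a) * (\<alpha> j - \<beta>) ^ Suc r) = \<gamma> j * (\<Sum>r<t. poly.coeff (La a) r * \<gamma> j ^ r)"
        using True unfolding R_def \<gamma>_def by (simp add: sum_distrib_left algebra_simps)
      also have "(\<Sum>r<t. poly.coeff (La a) r * \<gamma> j ^ r) = poly (La a) (\<gamma> j)"
        by (rule poly_sum_lt[OF degLa, symmetric])
      also have "\<dots> = (V (j, a) - Ev i a) / \<gamma> j"
        unfolding La_def using True by (intro poly_lagr[OF finT \<gamma>inj]) auto
      finally have "(\<Sum>r<t. R (r, a) * (\<alpha> j - \<beta>) ^ Suc r) = V (j, a) - Ev i a"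
        using \<gamma>nz True by simp
      then show ?thesis using True p unfolding gT_def shv_def by simp
    next
      case False
      then show ?thesis using V p unfolding gT_def fs_def by auto
    qed
  qed
  then show ?thesis using RRS by blast
qed

lemma gT_uniform:
  assumes T: "T \<subseteq> {..<k}" and cT: "card T \<le> t"
  shows "map_pmf (gT T i) (pmf_of_set RS) = pmf_of_set (fs (T \<times> {..<m}) F)"
proof (rule map_pmf_of_set_fibers)
  show "finite RS" by (rule RS_finite)
  show "RS \<noteq> {}" using RS_ne by blast
  have "finite T" using T finite_subset by blast
  then show "finite (fs (T \<times> {..<m}) F)" by (intro fs_finite) (auto simp: F_finite)
  show "gT T i ` RS \<subseteq> fs (T \<times> {..<m}) F" by (rule gT_img[OF T])
  fix V assume V: "V \<in> fs (T \<times> {..<m}) F"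
  have z: "(\<lambda>_. 0) \<in> fs (T \<times> {..<m}) F" by (rule fs_zero) simp
  show "card {x \<in> RS. gT T i x = V} = card {x \<in> RS. gT T i x = (\<lambda>_. 0)}"
    by (rule fibers_equal[OF RS_add gT_aff gT_surj[OF T cT V] gT_surj[OF T cT z]])
qed

lemma privacy:
  assumes T: "T \<subseteq> {..<k}" and cT: "card T \<le> t"
  shows "map_pmf (\<lambda>s. map (\<lambda>j. s ! j) (sorted_list_of_set T)) (Share i)
       = map_pmf (\<lambda>V. map (\<lambda>j. encS (\<lambda>a. V (j, a))) (sorted_list_of_set T)) (pmf_of_set (fs (T \<times> {..<m}) F))"
proof -
  have finT: "finite T" using T finite_subset by blast
  have setRS: "set_pmf (pmf_of_set RS) = RS" using RS_finite RS_ne by (intro set_pmf_of_set) auto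
  have "map_pmf (\<lambda>s. map (\<lambda>j. s ! j) (sorted_list_of_set T)) (Share i)
      = map_pmf (\<lambda>R. map (\<lambda>j. encS (\<lambda>a. gT T i R (j, a))) (sorted_list_of_set T)) (pmf_of_set RS)"
    unfolding Share_def map_pmf_comp
  proof (rule map_pmf_cong[OF refl])
    fix R assume R: "R \<in> set_pmf (pmf_of_set RS)"
    show "map (\<lambda>j. map (\<lambda>j. encS (shv R i j)) [0..<k] ! j) (sorted_list_of_set T)
        = map (\<lambda>j. encS (\<lambda>a. gT T i R (j, a))) (sorted_list_of_set T)"
    proof (rule map_cong[OF refl])
      fix j assume "j \<in> set (sorted_list_of_set T)"
      then have j: "j \<in> T" using finT by simp
      then have jk: "j < k" using T by auto
      have "map (\<lambda>j. encS (shv R i j)) [0..<k] ! j = encS (shv R i j)" using jk by simp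
      also have "\<dots> = encS (\<lambda>a. gT T i R (j, a))"
        by (rule encS_cong) (simp add: gT_def j)
      finally show "map (\<lambda>j. encS (shv R i j)) [0..<k] ! j = encS (\<lambda>a. gT T i R (j, a))" .
    qed
  qed
  also have "\<dots> = map_pmf (\<lambda>V. map (\<lambda>j. encS (\<lambda>a. V (j, a))) (sorted_list_of_set T)) (map_pmf (gT T i) (pmf_of_set RS))"
    by (simp add: map_pmf_comp)
  also have "\<dots> = map_pmf (\<lambda>V. map (\<lambda>j. encS (\<lambda>a. V (j, a))) (sorted_list_of_set T)) (pmf_of_set (fs (T \<times> {..<m}) F))"
    using gT_uniform[OF T cT] by simp
  finally show ?thesis .
qed

end


context pir begin

definition decB :: "bool list \<Rightarrow> K" where
  "decB xs = (if length xs = c then inv_into (GF c) encB xs else 0)"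

definition decF :: "bool list \<Rightarrow> K" where "decF xs = inv_into F encF xs"

definition recblk :: "bool list \<Rightarrow> nat \<Rightarrow> nat \<Rightarrow> bool list" where
  "recblk r u q = take c (drop ((u * l + q) * c) r)"

definition coefP :: "bool list list \<Rightarrow> nat \<Rightarrow> nat \<Rightarrow> K" where
  "coefP db u i' = (\<Sum>q<l. decB (recblk (db ! i') u q) * \<beta> ^ (n - 1 - q))"

definition var :: "nat \<Rightarrow> nat \<Rightarrow> nat" where "var q i' = q * nn + dig nn q i'"

definition evalP :: "bool list list \<Rightarrow> nat \<Rightarrow> (nat \<Rightarrow> K) \<Rightarrow> K" where
  "evalP db u x = (\<Sum>i'<N. coefP db u i' * (\<Prod>q<d. x (var q i')))"

definition wgt :: "nat \<Rightarrow> K" where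
  "wgt j = (\<Prod>l'\<in>{..<k}-{j}. (\<beta> - \<alpha> l') / (\<alpha> j - \<alpha> l'))"

definition decS :: "bool list \<Rightarrow> nat \<Rightarrow> K" where
  "decS s a = decF (take LF (drop (a * LF) s))"

definition Eval :: "bool list list \<Rightarrow> nat \<Rightarrow> bool list \<Rightarrow> bool list" where
  "Eval db j s = concat (map (\<lambda>u. encB (tau (wgt j * evalP db u (decS s)))) [0..<w])"

definition Phi :: "(nat \<Rightarrow> K) \<Rightarrow> nat \<Rightarrow> K" where
  "Phi b p = tau (\<beta> ^ p * (\<Sum>q<l. b q * \<beta> ^ (n - 1 - q)))"

definition Rec :: "bool list list \<Rightarrow> bool list" where
  "Rec outs = (let z = (\<lambda>j u. decB (take c (drop (u * c) (outs ! j))));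
                   vv = (\<lambda>u p. \<Sum>j<k. \<alpha> j ^ p * z j u);
                   bh = (\<lambda>u. THE b. b \<in> Bvec c l \<and> (\<forall>p<l. Phi b p = vv u p))
               in concat (map (\<lambda>idx. encB (bh (idx div l) (idx mod l))) [0..<w * l]))"

lemma decB_GF[simp]: "decB xs \<in> GF c"
  unfolding decB_def using encB_img by (auto intro: inv_into_into)

lemma decB_encB[simp]: "x \<in> GF c \<Longrightarrow> decB (encB x) = x"
  unfolding decB_def using encB_len encB_inj by (simp add: inv_into_f_f)

lemma encB_decB: "length xs = c \<Longrightarrow> encB (decB xs) = xs"
  unfolding decB_def using encB_img by (simp add: f_inv_into_f)

lemma decF_encF[simp]: "x \<in> F \<Longrightarrow> decF (encF x) = x"
  unfolding decF_def using encF_inj by (simp add: inv_into_f_f)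

lemma length_encS: "length (encS v) = m * LF"
  unfolding encS_def by (subst length_concat_const) (auto simp: encF_len)

lemma decS_encS:
  assumes "\<And>a. a < m \<Longrightarrow> v a \<in> F" "a < m"
  shows "decS (encS v) a = v a"
proof -
  have "take LF (drop (a * LF) (encS v)) = map (\<lambda>a. encF (v a)) [0..<m] ! a"
    unfolding encS_def by (rule take_drop_concat) (use assms(2) encF_len in auto)
  also have "\<dots> = encF (v a)" using assms(2) by simp
  finally show ?thesis unfolding decS_def using assms by simp
qed

lemma length_Eval: "length (Eval db j s) = w * c"
  unfolding Eval_def by (subst length_concat_const) (auto simp: encB_len)

lemma coefP_F: "coefP db u i' \<in> F"
  unfolding coefP_def by (rule F_sum) (intro F_mult F_power beta_F GF_sub_F decB_GF)

lemma var_less: "q < d \<Longrightarrow> var q i' < m"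
proof -
  assume q: "q < d"
  have "dig nn q i' < nn" using dig_less[OF nn0] .
  then have "var q i' < q * nn + nn" unfolding var_def by simp
  also have "\<dots> = Suc q * nn" by simp
  also have "\<dots> \<le> d * nn" using q by (intro mult_right_mono) auto
  finally show ?thesis unfolding m_def .
qed

lemma evalP_cong: "(\<And>a. a < m \<Longrightarrow> x a = x' a) \<Longrightarrow> evalP db u x = evalP db u x'"
  unfolding evalP_def using var_less by (intro sum.cong refl arg_cong2[where f = "(*)"] prod.cong) auto

lemma evalP_F: "(\<And>a. a < m \<Longrightarrow> x a \<in> F) \<Longrightarrow> evalP db u x \<in> F"
  unfolding evalP_def using var_less coefP_F by (auto intro!: F_sum F_prod F_mult)

lemma wgt_F: "j < k \<Longrightarrow> wgt j \<in> F"
  unfolding wgt_def by (auto intro!: F_prod)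

lemma Eval_share:
  assumes R: "R \<in> RS" and j: "j < k"
  shows "Eval db j (encS (shv R i j)) = concat (map (\<lambda>u. encB (tau (wgt j * evalP db u (shv R i j)))) [0..<w])"
proof -
  have "evalP db u (decS (encS (shv R i j))) = evalP db u (shv R i j)" for u
    by (rule evalP_cong) (rule decS_encS, use shv_F[OF R j] in auto)
  then show ?thesis unfolding Eval_def by simp
qed

end


context pir begin

lemma lagrange_key:
  assumes R: "R \<in> RS" and p: "p < l"
  shows "(\<Sum>j<k. \<alpha> j ^ p * (wgt j * evalP db u (shv R i j))) = \<beta> ^ p * evalP db u (Ev i)"
proof -
  define Qp where "Qp a = [:Ev i a:] + (\<Sum>r<t. Polynomial.smult (R (r, a)) ([:-\<beta>, 1:] ^ Suc r))" for a
  define fp where "fp = (\<Sum>i'<N. Polynomial.smult (coefP db u i') (\<Prod>q<d. Qp (var q i')))"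
  define h where "h = fp * Polynomial.monom 1 p"
  have plin: "poly [:-\<beta>, 1:] x = x - \<beta>" for x by (simp add: two_K)
  have pQ: "poly (Qp a) x = Ev i a + (\<Sum>r<t. R (r, a) * (x - \<beta>) ^ Suc r)" for a x
    unfolding Qp_def by (simp only: poly_add poly_sum poly_smult poly_power plin) simp
  have ph: "poly h x = evalP db u (\<lambda>a. poly (Qp a) x) * x ^ p" for x
    unfolding h_def fp_def evalP_def by (simp add: poly_sum poly_prod poly_monom)
  have degL: "Polynomial.degree [:-\<beta>, 1:] = 1" by simp
  have degQ: "Polynomial.degree (Qp a) \<le> t" for a
    unfolding Qp_def
  proof (rule degree_add_le)
    show "Polynomial.degree [:Ev i a:] \<le> t" by simp
    show "Polynomial.degree (\<Sum>r<t. Polynomial.smult (R (r, a)) ([:-\<beta>, 1:] ^ Suc r)) \<le> t"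
    proof (rule degree_sum_le)
      fix r assume "r \<in> {..<t}"
      then have r: "r < t" by simp
      have "Polynomial.degree (Polynomial.smult (R (r, a)) ([:-\<beta>, 1:] ^ Suc r)) \<le> Polynomial.degree ([:-\<beta>, 1:] ^ Suc r)"
        by (rule degree_smult_le)
      also have "\<dots> \<le> Polynomial.degree [:-\<beta>, 1:] * Suc r" by (rule degree_power_le)
      also have "\<dots> \<le> t" using r degL by simp
      finally show "Polynomial.degree (Polynomial.smult (R (r, a)) ([:-\<beta>, 1:] ^ Suc r)) \<le> t" .
    qed simp
  qed
  have degfp: "Polynomial.degree fp \<le> d * t"
    unfolding fp_def
  proof (rule degree_sum_le)
    fix i' assume "i' \<in> {..<N}"
    have "Polynomial.degree (\<Prod>q<d. Qp (var q i')) \<le> (\<Sum>q<d. Polynomial.degree (Qp (var q i')))"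
      using degree_prod_sum_le[of "{..<d}" "\<lambda>q. Qp (var q i')"] by (simp add: o_def)
    also have "\<dots> \<le> (\<Sum>q<d. t)" by (rule sum_mono) (rule degQ)
    also have "\<dots> = d * t" by simp
    finally show "Polynomial.degree (Polynomial.smult (coefP db u i') (\<Prod>q<d. Qp (var q i'))) \<le> d * t"
      using degree_smult_le order.trans by blast
  qed simp
  have degh: "Polynomial.degree h < card {..<k}"
  proof -
    have "Polynomial.degree h \<le> Polynomial.degree fp + Polynomial.degree (Polynomial.monom (1::K) p)"
      unfolding h_def by (rule degree_mult_le)
    also have "\<dots> \<le> d * t + p" using degfp degree_monom_le[of "1::K" p] by linarith
    also have "\<dots> < k" using p kdt by simp
    finally show ?thesis by simp
  qed
  have "poly h \<beta> = (\<Sum>j\<in>{..<k}. poly h (\<alpha> j) * (\<Prod>l'\<in>{..<k}-{j}. (\<beta> - \<alpha> l') / (\<alpha> j - \<alpha> l')))"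
    by (rule lagr_eval[OF finite_lessThan \<alpha>inj degh])
  also have "\<dots> = (\<Sum>j<k. \<alpha> j ^ p * (wgt j * evalP db u (shv R i j)))"
  proof (rule sum.cong[OF refl])
    fix j assume "j \<in> {..<k}"
    have "(\<lambda>a. poly (Qp a) (\<alpha> j)) = shv R i j" by (rule ext) (simp add: pQ shv_def)
    then show "poly h (\<alpha> j) * (\<Prod>l'\<in>{..<k}-{j}. (\<beta> - \<alpha> l') / (\<alpha> j - \<alpha> l')) = \<alpha> j ^ p * (wgt j * evalP db u (shv R i j))"
      unfolding ph wgt_def by (simp add: mult_ac)
  qed
  finally have eq1: "poly h \<beta> = (\<Sum>j<k. \<alpha> j ^ p * (wgt j * evalP db u (shv R i j)))" .
  have "(\<lambda>a. poly (Qp a) \<beta>) = Ev i" by (rule ext) (simp add: pQ)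
  then have "poly h \<beta> = \<beta> ^ p * evalP db u (Ev i)" unfolding ph by (simp add: mult.commute)
  then show ?thesis using eq1 by simp
qed

lemma Ev_var: "Ev i (var q i') = (if dig nn q i' = dig nn q i then 1 else 0)"
proof -
  have dl: "dig nn q i' < nn" by (rule dig_less[OF nn0])
  have "(q * nn + dig nn q i') mod nn = dig nn q i'" using dl by simp
  moreover have "(q * nn + dig nn q i') div nn = q" using dl nn0 by simp
  ultimately show ?thesis unfolding Ev_def var_def by simp
qed

lemma prod_01: "(\<Prod>q<(d'::nat). (if P q then (1::K) else 0)) = (if \<forall>q<d'. P q then 1 else 0)"
  by (induction d') (auto simp: less_Suc_eq)

lemma evalP_Ev:
  assumes i: "i < N"
  shows "evalP db u (Ev i) = coefP db u i"
proof -
  have "evalP db u (Ev i) = (\<Sum>i'<N. coefP db u i' * (if i' = i then 1 else 0))"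
    unfolding evalP_def
  proof (rule sum.cong[OF refl])
    fix i' assume i': "i' \<in> {..<N}"
    have "(\<Prod>q<d. Ev i (var q i')) = (if \<forall>q<d. dig nn q i' = dig nn q i then 1 else 0)"
      unfolding Ev_var by (rule prod_01)
    also have "(\<forall>q<d. dig nn q i' = dig nn q i) \<longleftrightarrow> i' = i"
    proof
      assume "\<forall>q<d. dig nn q i' = dig nn q i"
      then show "i' = i" using digits_inj[OF nn0, of i' d i] i' i Nn by auto
    qed simp
    finally show "coefP db u i' * (\<Prod>q<d. Ev i (var q i')) = coefP db u i' * (if i' = i then 1 else 0)"
      by simp
  qed
  also have "\<dots> = coefP db u i" using i by (simp add: sum.delta' if_distrib cong: if_cong)
  finally show ?thesis .
qed

lemma Phi_expand:
  assumes b: "b \<in> Bvec c l"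
  shows "Phi b p = (\<Sum>q<l. b q * tau (\<beta> ^ (p + (n - 1 - q))))"
proof -
  have "\<beta> ^ p * (\<Sum>q<l. b q * \<beta> ^ (n - 1 - q)) = (\<Sum>q<l. b q * \<beta> ^ (p + (n - 1 - q)))"
    by (simp add: sum_distrib_left power_add mult_ac)
  then show ?thesis unfolding Phi_def using b
    by (simp only:) (rule tau_lin, auto simp: Bvec_def)
qed

lemma Phi_inj:
  assumes b: "b \<in> Bvec c l" and b': "b' \<in> Bvec c l" and eq: "\<And>p. p < l \<Longrightarrow> Phi b p = Phi b' p"
  shows "b = b'"
proof -
  have main: "p < l \<longrightarrow> b p = b' p" for p
  proof (induction p rule: less_induct)
    case (less p)
    show ?case
    proof
      assume p: "p < l"
      define T where "T q = tau (\<beta> ^ (p + (n - 1 - q)))" for q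
      have "Phi b p + Phi b' p = 0" using eq[OF p] by simp
      also have "Phi b p + Phi b' p = (\<Sum>q<l. (b q + b' q) * T q)"
        unfolding Phi_expand[OF b] Phi_expand[OF b'] T_def by (simp add: sum.distrib distrib_right)
      also have "\<dots> = (\<Sum>q<l. if q = p then b p + b' p else 0)"
      proof (rule sum.cong[OF refl])
        fix q assume q: "q \<in> {..<l}"
        show "(b q + b' q) * T q = (if q = p then b p + b' p else 0)"
        proof (cases "q < p")
          case True
          then have "b q = b' q" using less.IH q by auto
          then show ?thesis using True by simp
        next
          case False
          show ?thesis
          proof (cases "q = p")
            case True
            have "p + (n - 1 - q) = n - 1" using True p ln by simp
            then have "T q = 1" unfolding T_def using tau_pow[of "n - 1"] n1 by simp
            then show ?thesis using True by simp
          next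
            case False2: False
            then have qp: "p < q" using False by simp
            have "p + (n - 1 - q) < n - 1" using qp q ln by simp
            then have "T q = 0" unfolding T_def using tau_pow[of "p + (n - 1 - q)"] by simp
            then show ?thesis using False2 by simp
          qed
        qed
      qed
      also have "\<dots> = b p + b' p" using p by (simp add: sum.delta')
      finally have "b p + b' p = 0" by simp
      then show "b p = b' p" by (metis K_add_self add_right_cancel)
    qed
  qed
  show ?thesis
  proof (rule ext)
    fix p
    show "b p = b' p"
    proof (cases "p < l")
      case True then show ?thesis using main by blast
    next
      case False then show ?thesis using b b' by (simp add: Bvec_def)
    qed
  qed
qed

definition bvec :: "bool list \<Rightarrow> nat \<Rightarrow> nat \<Rightarrow> K" where
  "bvec r u = (\<lambda>q. if q < l then decB (recblk r u q) else 0)"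

lemma bvec_Bvec: "bvec r u \<in> Bvec c l"
  unfolding bvec_def Bvec_def by auto

lemma coefP_bvec: "coefP db u i = (\<Sum>q<l. bvec (db ! i) u q * \<beta> ^ (n - 1 - q))"
  unfolding coefP_def bvec_def by (rule sum.cong) auto

end


context pir begin

lemma Rec_correct:
  assumes db: "valid_db N (w * l * c) db" and i: "i < N" and R: "R \<in> RS"
  shows "Rec (map (\<lambda>j. Eval db j (map (\<lambda>j. encS (shv R i j)) [0..<k] ! j)) [0..<k]) = db ! i"
proof -
  define outs where "outs = map (\<lambda>j. Eval db j (map (\<lambda>j. encS (shv R i j)) [0..<k] ! j)) [0..<k]"
  define zz where "zz j u = tau (wgt j * evalP db u (shv R i j))" for j u
  define r where "r = db ! i"
  have lr: "length r = w * l * c" using db i unfolding valid_db_def r_def by auto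
  have outs_j: "outs ! j = concat (map (\<lambda>u. encB (zz j u)) [0..<w])" if "j < k" for j
    unfolding outs_def zz_def using that Eval_share[OF R that] by simp
  have argF: "wgt j * evalP db u (shv R i j) \<in> F" if "j < k" for j u
    using that wgt_F shv_F[OF R that] by (auto intro!: F_mult evalP_F)
  have zzGF: "zz j u \<in> GF c" if "j < k" for j u
    unfolding zz_def using tau_GF[OF argF[OF that]] .
  have z: "decB (take c (drop (u * c) (outs ! j))) = zz j u" if "j < k" "u < w" for j u
  proof -
    have "take c (drop (u * c) (outs ! j)) = map (\<lambda>u. encB (zz j u)) [0..<w] ! u"
      unfolding outs_j[OF that(1)] by (rule take_drop_concat) (use that encB_len in auto)
    then show ?thesis using that zzGF by simp
  qed
  have vv: "(\<Sum>j<k. \<alpha> j ^ p * decB (take c (drop (u * c) (outs ! j)))) = Phi (bvec r u) p"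
    if u: "u < w" and p: "p < l" for u p
  proof -
    have "(\<Sum>j<k. \<alpha> j ^ p * decB (take c (drop (u * c) (outs ! j)))) = (\<Sum>j<k. \<alpha> j ^ p * zz j u)"
      using z u by simp
    also have "\<dots> = tau (\<Sum>j<k. \<alpha> j ^ p * (wgt j * evalP db u (shv R i j)))"
      unfolding zz_def by (rule tau_lin[symmetric]) (use \<alpha>B argF in auto)
    also have "\<dots> = tau (\<beta> ^ p * coefP db u i)"
      using lagrange_key[OF R p] evalP_Ev[OF i] by simp
    also have "\<dots> = Phi (bvec r u) p"
      unfolding Phi_def coefP_bvec r_def ..
    finally show ?thesis .
  qed
  have bh: "(THE b. b \<in> Bvec c l \<and> (\<forall>p<l. Phi b p = (\<Sum>j<k. \<alpha> j ^ p * decB (take c (drop (u * c) (outs ! j)))))) = bvec r u"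
    if u: "u < w" for u
  proof (rule the_equality)
    show "bvec r u \<in> Bvec c l \<and> (\<forall>p<l. Phi (bvec r u) p = (\<Sum>j<k. \<alpha> j ^ p * decB (take c (drop (u * c) (outs ! j)))))"
      using bvec_Bvec vv[OF u] by simp
    fix b assume b: "b \<in> Bvec c l \<and> (\<forall>p<l. Phi b p = (\<Sum>j<k. \<alpha> j ^ p * decB (take c (drop (u * c) (outs ! j)))))"
    show "b = bvec r u"
      by (rule Phi_inj) (use b bvec_Bvec vv[OF u] in auto)
  qed
  have blk: "encB (bvec r (idx div l) (idx mod l)) = take c (drop (idx * c) r)" if idx: "idx < w * l" for idx
  proof -
    have lpos: "l > 0" using l1 by simp
    have "idx mod l < l" using lpos by simp
    then have "bvec r (idx div l) (idx mod l) = decB (recblk r (idx div l) (idx mod l))"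
      unfolding bvec_def by simp
    also have "recblk r (idx div l) (idx mod l) = take c (drop (idx * c) r)"
      unfolding recblk_def by (simp add: mult.commute[of _ l])
    finally have eq: "bvec r (idx div l) (idx mod l) = decB (take c (drop (idx * c) r))" .
    have "Suc idx \<le> w * l" using idx by simp
    then have "Suc idx * c \<le> w * l * c" by (rule mult_right_mono) simp
    then have "length (take c (drop (idx * c) r)) = c" using lr by simp
    then show ?thesis using eq encB_decB by simp
  qed
  have "Rec outs = concat (map (\<lambda>idx. encB (bvec r (idx div l) (idx mod l))) [0..<w * l])"
  proof -
    have "Rec outs = concat (map (\<lambda>idx. encB ((\<lambda>u. THE b. b \<in> Bvec c l \<and> (\<forall>p<l. Phi b p = (\<Sum>j<k. \<alpha> j ^ p * decB (take c (drop (u * c) (outs ! j)))))) (idx div l) (idx mod l))) [0..<w * l])"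
      unfolding Rec_def Let_def ..
    also have "\<dots> = concat (map (\<lambda>idx. encB (bvec r (idx div l) (idx mod l))) [0..<w * l])"
    proof (intro arg_cong[where f = concat] map_cong refl)
      fix idx assume "idx \<in> set [0..<w * l]"
      then have idx: "idx < w * l" by simp
      then have "idx div l < w" using l1 by (simp add: less_mult_imp_div_less)
      then show "encB ((\<lambda>u. THE b. b \<in> Bvec c l \<and> (\<forall>p<l. Phi b p = (\<Sum>j<k. \<alpha> j ^ p * decB (take c (drop (u * c) (outs ! j)))))) (idx div l) (idx mod l)) = encB (bvec r (idx div l) (idx mod l))"
        using bh by simp
    qed
    finally show ?thesis .
  qed
  also have "\<dots> = concat (map (\<lambda>idx. take c (drop (idx * c) r)) [0..<w * l])"
    by (intro arg_cong[where f = concat] map_cong refl) (use blk in simp)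
  also have "\<dots> = r" by (rule concat_blocks) (simp add: lr)
  finally show ?thesis unfolding outs_def r_def .
qed

lemma set_Share: "set_pmf (Share i) = (\<lambda>R. map (\<lambda>j. encS (shv R i j)) [0..<k]) ` RS"
  unfolding Share_def using RS_finite RS_ne by (subst set_map_pmf, subst set_pmf_of_set) auto

lemma pir_main:
  shows "is_PIR t k N (w * l * c) Share Eval Rec"
    and "download_cost_eq k N (w * l * c) Share Eval (w * k * c)"
    and "upload_cost_le N Share (real (k * (m * LF)))"
proof -
  show "is_PIR t k N (w * l * c) Share Eval Rec"
    unfolding is_PIR_def
  proof (intro conjI allI impI ballI)
    fix i s assume "i < N" "s \<in> set_pmf (Share i)"
    then show "length s = k" using set_Share by auto
  next
    fix db i s assume a: "valid_db N (w * l * c) db \<and> i < N" and s: "s \<in> set_pmf (Share i)"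
    then obtain R where R: "R \<in> RS" "s = map (\<lambda>j. encS (shv R i j)) [0..<k]" using set_Share by auto
    show "Rec (map (\<lambda>j. Eval db j (s ! j)) [0..<k]) = db ! i"
      using Rec_correct[OF conjunct1[OF a] conjunct2[OF a] R(1)] R(2) by simp
  next
    fix T i i' assume a: "T \<subseteq> {..<k} \<and> card T \<le> t \<and> i < N \<and> i' < N"
    show "map_pmf (\<lambda>s. map ((!) s) (sorted_list_of_set T)) (Share i) = map_pmf (\<lambda>s. map ((!) s) (sorted_list_of_set T)) (Share i')"
      using privacy[of T i] privacy[of T i'] a by simp
  qed
  show "download_cost_eq k N (w * l * c) Share Eval (w * k * c)"
    unfolding download_cost_eq_def
  proof (intro allI impI ballI)
    fix db i s
    have "sum_list (map (\<lambda>j. length (Eval db j (s ! j))) [0..<k]) = sum_list (map (\<lambda>j. w * c) [0..<k])"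
      by (simp add: length_Eval)
    also have "\<dots> = w * k * c" by (simp add: sum_list_triv)
    finally show "sum_list (map (\<lambda>j. length (Eval db j (s ! j))) [0..<k]) = w * k * c" .
  qed
  show "upload_cost_le N Share (real (k * (m * LF)))"
    unfolding upload_cost_le_def
  proof (intro allI impI ballI)
    fix i s assume "i < N" "s \<in> set_pmf (Share i)"
    then obtain R where R: "s = map (\<lambda>j. encS (shv R i j)) [0..<k]" using set_Share by auto
    have "sum_list (map length s) = sum_list (map (\<lambda>j. m * LF) [0..<k])"
      unfolding R by (simp add: length_encS o_def)
    also have "\<dots> = k * (m * LF)" by (simp add: sum_list_triv)
    finally show "real (sum_list (map length s)) \<le> real (k * (m * LF))" by simp
  qed
qed

end


lemma exists_beta2:
  assumes c: "c \<ge> 1" and l: "l \<ge> 1"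
  shows "\<exists>\<beta>\<in>GF (c * (2 * l + 1)). indep c \<beta> l \<and> \<beta> \<notin> GF c"
proof -
  define Bad where "Bad = (\<Union>b\<in>Bvec c l - {0}. {x. lin x l b = 0})"
  have finB: "finite (Bvec c l - {0})" using card_Bvec(2)[OF c] by simp
  have finBad: "finite Bad" unfolding Bad_def using finB lin_roots_card(1)[OF _ _ l] by blast
  have "card Bad \<le> (\<Sum>b\<in>Bvec c l - {0}. card {x. lin x l b = 0})"
    unfolding Bad_def by (rule card_UN_le[OF finB])
  also have "\<dots> \<le> (\<Sum>b\<in>Bvec c l - {0}. l)"
    by (rule sum_mono) (use lin_roots_card[OF _ _ l] in \<open>auto intro: less_imp_le\<close>)
  also have "\<dots> \<le> card (Bvec c l) * l"
    using finB by (simp add: card_Diff1_le)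
  also have "\<dots> = 2 ^ (c * l) * l" using card_Bvec[OF c] by simp
  finally have cBad: "card Bad \<le> 2 ^ (c * l) * l" .
  have "l < 2 ^ l" by (rule less_exp)
  also have "\<dots> \<le> 2 ^ (c * l)" using c by (intro power_increasing) auto
  finally have l2: "l < 2 ^ (c * l)" .
  have c2: "(2::nat) ^ c \<le> 2 ^ (c * l)" using c l by (intro power_increasing) auto
  have "card (Bad \<union> GF c) \<le> card Bad + card (GF c)" by (rule card_Un_le)
  also have "\<dots> \<le> 2 ^ (c * l) * l + 2 ^ c" using cBad GF_card[OF c] by simp
  also have "\<dots> < 2 ^ (c * l) * 2 ^ (c * l) + 2 ^ (c * l) * 2 ^ (c * l)"
  proof -
    have "2 ^ (c * l) * l < 2 ^ (c * l) * 2 ^ (c * l)" using l2 by simp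
    moreover have "(2::nat) ^ c \<le> 2 ^ (c * l) * 2 ^ (c * l)"
      using c2 by (metis le_trans mult_le_mono2 mult_1_right one_le_numeral one_le_power)
    ultimately show ?thesis by linarith
  qed
  also have "\<dots> = 2 ^ (c * (2 * l) + 1)"
  proof -
    have e1: "c * (2 * l) = c * l + c * l" by simp
    have "(2::nat) ^ (c * l) * 2 ^ (c * l) = 2 ^ (c * (2 * l))" by (simp only: e1 power_add)
    then show ?thesis by simp
  qed
  also have "\<dots> \<le> 2 ^ (c * (2 * l + 1))" using c by (intro power_increasing) auto
  also have "\<dots> = card (GF (c * (2 * l + 1)))" using GF_card[of "c * (2 * l + 1)"] c by simp
  finally have lt: "card (Bad \<union> GF c) < card (GF (c * (2 * l + 1)))" .
  have "\<not> GF (c * (2 * l + 1)) \<subseteq> Bad \<union> GF c"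
  proof
    assume sub: "GF (c * (2 * l + 1)) \<subseteq> Bad \<union> GF c"
    have "finite (Bad \<union> GF c)" using finBad GF_card(2)[OF c] by simp
    then have "card (GF (c * (2 * l + 1))) \<le> card (Bad \<union> GF c)" using card_mono sub by blast
    then show False using lt by simp
  qed
  then obtain \<beta> where beta: "\<beta> \<in> GF (c * (2 * l + 1))" "\<beta> \<notin> Bad" "\<beta> \<notin> GF c" by blast
  have "indep c \<beta> l" unfolding indep_def
  proof (intro ballI impI allI)
    fix b e assume b: "b \<in> Bvec c l" and z: "lin \<beta> l b = 0" and e: "e < l"
    have "b = 0"
    proof (rule ccontr)
      assume "b \<noteq> 0"
      then have "\<beta> \<in> Bad" unfolding Bad_def using b z by blast
      then show False using beta by simp
    qed
    then show "b e = 0" by simp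
  qed
  then show ?thesis using beta by blast
qed

lemma ln2_half: "ln (2::real) > 1 / 2"
proof -
  have e: "exp (1/2::real) * exp (1/2) = exp 1" by (simp flip: exp_add)
  have "exp (1/2::real) < 2"
  proof (rule ccontr)
    assume "\<not> exp (1/2::real) < 2"
    then have "exp (1/2::real) \<ge> 2" by simp
    then have "exp (1/2::real) * exp (1/2) \<ge> 2 * 2" by (intro mult_mono) auto
    then show False using e e_less_272 by simp
  qed
  then have "ln (exp (1/2::real)) < ln 2" by (subst ln_less_cancel_iff) auto
  then show ?thesis by simp
qed

lemma clog2_facts:
  assumes k: "k \<ge> 2"
  shows "clog2 k \<ge> 1" "k \<le> 2 ^ clog2 k" "real (clog2 k) \<le> 4 * ln (real k)"
proof -
  define x where "x = log 2 (real k)"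
  have x1: "x \<ge> 1" unfolding x_def using k by simp
  have cx: "real (clog2 k) = of_int \<lceil>x\<rceil>" unfolding clog2_def x_def[symmetric] using x1 by simp
  have ce: "x \<le> of_int \<lceil>x\<rceil>" "of_int \<lceil>x\<rceil> < x + 1"
    using ceiling_correct[of x] by linarith+
  show "clog2 k \<ge> 1" using cx ce x1 by linarith
  have "real k = 2 powr x" unfolding x_def using k by simp
  also have "\<dots> \<le> 2 powr (real (clog2 k))" using cx ce by (intro powr_mono) auto
  also have "\<dots> = real (2 ^ clog2 k)" by (simp add: powr_realpow)
  finally show "k \<le> 2 ^ clog2 k" by linarith
  have "real (clog2 k) \<le> 2 * x" using cx ce x1 by linarith
  also have "x = ln (real k) / ln 2" unfolding x_def by (simp add: log_def)
  also have "2 * (ln (real k) / ln 2) \<le> 4 * ln (real k)"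
  proof -
    have lk: "ln (real k) \<ge> 0" using k by simp
    have "2 * (ln (real k) / ln 2) = ln (real k) * (2 / ln 2)" by simp
    also have "\<dots> \<le> ln (real k) * 4"
      using ln2_half lk by (intro mult_left_mono) (auto simp: field_simps)
    finally show ?thesis by simp
  qed
  finally show "real (clog2 k) \<le> 4 * ln (real k)" .
qed

lemma nn_facts:
  assumes N: "N \<ge> 1" and d: "d \<ge> 1"
  defines "nn \<equiv> nat \<lceil>real N powr (1 / real d)\<rceil>"
  shows "nn > 0" "N \<le> nn ^ d" "real nn \<le> 2 * real N powr (1 / real d)"
proof -
  define x where "x = real N powr (1 / real d)"
  have x1: "x \<ge> 1" unfolding x_def using N by (intro ge_one_powr_ge_zero) auto
  have nnx: "real nn = of_int \<lceil>x\<rceil>" unfolding nn_def x_def[symmetric] using x1 by simp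
  have ce: "x \<le> of_int \<lceil>x\<rceil>" "of_int \<lceil>x\<rceil> < x + 1"
    using ceiling_correct[of x] by linarith+
  show "nn > 0" using nnx ce x1 by linarith
  have "x ^ d = real N"
  proof -
    have "x ^ d = x powr real d" using x1 by (simp add: powr_realpow)
    also have "\<dots> = real N powr (1 / real d * real d)" unfolding x_def by (simp add: powr_powr)
    also have "\<dots> = real N" using d N by simp
    finally show ?thesis .
  qed
  moreover have "x ^ d \<le> real nn ^ d" using nnx ce x1 by (intro power_mono) auto
  ultimately have "real N \<le> real (nn ^ d)" by simp
  then show "N \<le> nn ^ d" by linarith
  show "real nn \<le> 2 * real N powr (1 / real d)" using nnx ce x1 unfolding x_def by linarith
qed


lemma construct:
  fixes d t k w N :: nat
  assumes d1: "d \<ge> 1" and t1: "t \<ge> 1" and w1: "w \<ge> 1" and N1: "N \<ge> 1" and dtk: "d * t + 1 \<le> k"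
  shows "\<exists>Share Eval Rec. is_PIR t k N (w * (k - d * t) * clog2 k) Share Eval Rec \<and>
     upload_cost_le N Share (real (k * (d * nat \<lceil>real N powr (1 / real d)\<rceil> * (clog2 k * (2 * (k - d * t) + 1))))) \<and>
     download_cost_eq k N (w * (k - d * t) * clog2 k) Share Eval (w * k * clog2 k)"
proof -
  define c where "c = clog2 k"
  define l where "l = k - d * t"
  define M where "M = 2 * l + 1"
  define nn where "nn = nat \<lceil>real N powr (1 / real d)\<rceil>"
  have dt1: "d * t \<ge> 1" using d1 t1 by simp
  have k2: "k \<ge> 2" using dt1 dtk by linarith
  have c1: "c \<ge> 1" and kc: "k \<le> 2 ^ c" using clog2_facts[OF k2] unfolding c_def by auto
  have l1: "l \<ge> 1" using dtk unfolding l_def by simp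
  have kdt: "k = d * t + l" using dtk unfolding l_def by simp
  obtain \<beta> where \<beta>: "\<beta> \<in> GF (c * M)" "indep c \<beta> l" "\<beta> \<notin> GF c"
    using exists_beta2[OF c1 l1] unfolding M_def by blast
  obtain n where n: "l \<le> n" "n \<le> M" "indep c \<beta> n" "\<beta> ^ n \<in> lin \<beta> n ` Bvec c n"
    using exists_n[OF c1 l1 \<beta>(1) _ \<beta>(2)] unfolding M_def by auto
  interpret S: spanF c n \<beta>
    by unfold_locales (use c1 l1 n in auto)
  obtain \<alpha> where \<alpha>: "\<alpha> ` {..<k} \<subseteq> GF c" "inj_on \<alpha> {..<k}"
    using card_le_inj[of "{..<k}" "GF c"] GF_card[OF c1] kc by auto
  obtain encB :: "K \<Rightarrow> bool list" where eB: "inj_on encB (GF c)" "\<forall>x. length (encB x) = c" "encB ` GF c = {xs. length xs = c}"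
    using exists_bij_enc[OF GF_card(2)[OF c1] GF_card(1)[OF c1]] by blast
  have cF: "card S.F \<le> 2 ^ (c * M)"
  proof -
    have "card S.F \<le> 2 ^ (c * n)" by (rule S.F_card)
    also have "\<dots> \<le> 2 ^ (c * M)" using n(2) by (intro power_increasing) auto
    finally show ?thesis .
  qed
  obtain encF :: "K \<Rightarrow> bool list" where eF: "inj_on encF S.F" "\<forall>x. length (encF x) = c * M"
    using exists_enc[OF S.F_finite cF] by blast
  have nnf: "nn > 0" "N \<le> nn ^ d" using nn_facts[OF N1 d1] unfolding nn_def by auto
  interpret P: pir c n \<beta> k d t w N nn l "c * M" \<alpha> encB encF
    by unfold_locales (use kdt l1 n t1 \<alpha> \<beta> nnf eB eF in auto)
  have main: "is_PIR t k N (w * l * c) P.Share P.Eval P.Rec"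
     "download_cost_eq k N (w * l * c) P.Share P.Eval (w * k * c)"
     "upload_cost_le N P.Share (real (k * (P.m * (c * M))))"
    using P.pir_main by auto
  have e1: "w * (k - d * t) * clog2 k = w * l * c" by (simp add: c_def l_def)
  have e2: "w * k * clog2 k = w * k * c" by (simp add: c_def)
  have e3: "k * (d * nat \<lceil>real N powr (1 / real d)\<rceil> * (clog2 k * (2 * (k - d * t) + 1))) = k * (P.m * (c * M))"
    unfolding P.m_def by (simp add: nn_def c_def l_def M_def)
  show ?thesis unfolding e1 e2 e3 using main by blast
qed

lemma upload_mono: "upload_cost_le N Share U \<Longrightarrow> U \<le> U' \<Longrightarrow> upload_cost_le N Share U'"
  unfolding upload_cost_le_def by force

lemma upload_bound:
  fixes d t k N :: nat
  assumes d1: "d \<ge> 1" and t1: "t \<ge> 1" and N1: "N \<ge> 1" and dtk: "d * t + 1 \<le> k"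
  shows "real (k * (d * nat \<lceil>real N powr (1 / real d)\<rceil> * (clog2 k * (2 * (k - d * t) + 1))))
       \<le> 24 * real k ^ 3 * ln (real k) * real N powr (1 / real d)"
proof -
  define x where "x = real N powr (1 / real d)"
  define nn where "nn = nat \<lceil>real N powr (1 / real d)\<rceil>"
  define c where "c = clog2 k"
  define M where "M = 2 * (k - d * t) + 1"
  have dt1: "d * t \<ge> 1" using d1 t1 by simp
  have k2: "k \<ge> 2" using dt1 dtk by linarith
  have x1: "x \<ge> 1" unfolding x_def using N1 by (intro ge_one_powr_ge_zero) auto
  have hnn: "real nn \<le> 2 * x" using nn_facts(3)[OF N1 d1] unfolding nn_def x_def .
  have hc: "real c \<le> 4 * ln (real k)" using clog2_facts(3)[OF k2] unfolding c_def .
  have hM: "real M \<le> 3 * real k" unfolding M_def using k2 by simp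
  have hd: "real d \<le> real k"
  proof -
    have "d \<le> d * t" using t1 by simp
    then have "d \<le> k" using dtk by linarith
    then show ?thesis by simp
  qed
  have lk: "ln (real k) \<ge> 0" using k2 by simp
  have a: "real c * real M \<le> (4 * ln (real k)) * (3 * real k)"
    by (rule mult_mono[OF hc hM]) (use lk in auto)
  have b: "real d * real nn \<le> real k * (2 * x)"
    by (rule mult_mono[OF hd hnn]) auto
  have ab: "(real d * real nn) * (real c * real M) \<le> (real k * (2 * x)) * ((4 * ln (real k)) * (3 * real k))"
    by (rule mult_mono[OF b a]) (use lk x1 in auto)
  have "real (k * (d * nn * (c * M))) = real k * ((real d * real nn) * (real c * real M))" by simp
  also have "\<dots> \<le> real k * ((real k * (2 * x)) * ((4 * ln (real k)) * (3 * real k)))"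
    by (rule mult_left_mono[OF ab]) simp
  also have "\<dots> = 24 * real k ^ 3 * ln (real k) * x" by (simp add: power3_eq_cube algebra_simps)
  finally show ?thesis unfolding x_def nn_def c_def M_def .
qed

theorem mainTheorem8:
  "\<exists>C::real. C > 0 \<and>
    (\<forall>d t k w N :: nat. d \<ge> 1 \<and> t \<ge> 1 \<and> k \<ge> 1 \<and> w \<ge> 1 \<and> N \<ge> 1 \<and> d * t + 1 \<le> k \<longrightarrow>
      (let L = w * (k - d * t) * clog2 k; D = w * k * clog2 k in
       \<exists>Share Eval Rec.
         is_PIR t k N L Share Eval Rec \<and>
         upload_cost_le N Share (C * real k ^ 3 * ln (real k) * real N powr (1 / real d)) \<and>
         download_cost_eq k N L Share Eval D \<and>
         download_rate L D = 1 - real (d * t) / real k))"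
proof (rule exI[of _ 24], intro conjI allI impI)
  show "(24::real) > 0" by simp
  fix d t k w N :: nat
  assume H: "d \<ge> 1 \<and> t \<ge> 1 \<and> k \<ge> 1 \<and> w \<ge> 1 \<and> N \<ge> 1 \<and> d * t + 1 \<le> k"
  then have d1: "d \<ge> 1" and t1: "t \<ge> 1" and w1: "w \<ge> 1" and N1: "N \<ge> 1" and dtk: "d * t + 1 \<le> k" by auto
  obtain Share Eval Rec where SER:
    "is_PIR t k N (w * (k - d * t) * clog2 k) Share Eval Rec"
    "upload_cost_le N Share (real (k * (d * nat \<lceil>real N powr (1 / real d)\<rceil> * (clog2 k * (2 * (k - d * t) + 1)))))"
    "download_cost_eq k N (w * (k - d * t) * clog2 k) Share Eval (w * k * clog2 k)"
    using construct[OF d1 t1 w1 N1 dtk] by blast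
  have up: "upload_cost_le N Share (24 * real k ^ 3 * ln (real k) * real N powr (1 / real d))"
    by (rule upload_mono[OF SER(2) upload_bound[OF d1 t1 N1 dtk]])
  have dt1: "d * t \<ge> 1" using d1 t1 by simp
  have k2: "k \<ge> 2" using dt1 dtk by linarith
  have c1: "clog2 k \<ge> 1" using clog2_facts(1)[OF k2] .
  have rate: "download_rate (w * (k - d * t) * clog2 k) (w * k * clog2 k) = 1 - real (d * t) / real k"
  proof -
    have le: "d * t \<le> k" using dtk by simp
    have pos: "real w > 0" "real k > 0" "real (clog2 k) > 0" using w1 k2 c1 by auto
    have "download_rate (w * (k - d * t) * clog2 k) (w * k * clog2 k)
        = real w * (real k - real (d * t)) * real (clog2 k) / (real w * real k * real (clog2 k))"
      unfolding download_rate_def using le by (simp add: of_nat_diff)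
    also have "\<dots> = (real k - real (d * t)) / real k" using pos by (simp add: field_simps)
    also have "\<dots> = 1 - real (d * t) / real k" using pos by (simp add: field_simps)
    finally show ?thesis .
  qed
  show "let L = w * (k - d * t) * clog2 k; D = w * k * clog2 k in
       \<exists>Share Eval Rec.
         is_PIR t k N L Share Eval Rec \<and>
         upload_cost_le N Share (24 * real k ^ 3 * ln (real k) * real N powr (1 / real d)) \<and>
         download_cost_eq k N L Share Eval D \<and>
         download_rate L D = 1 - real (d * t) / real k"
    unfolding Let_def using SER(1) up SER(3) rate by blast
qed


end
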